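(* Let $C\subset\mathbb{R}^d$ be a convex body that is lattice complete with respect to a $d$-dimensional lattice $\Lambda$, and let $k$ be the dimension of the linear span of the set of diameter directions $v\in\Lambda$ of $C$. Then $C$ is a polytope with at most $2^{k+1}-2$ facets.
   Context: A convex body is a compact convex set with non-empty interior. A lattice $\Lambda\subset\mathbb{R}^d$ is a discrete subgroup spanning $\mathbb{R}^d$. A segment $[a,b]$ is a lattice segment if $b-a$ is parallel to a nonzero vector of $\Lambda$; its lattice length is $|b-a|/|v|$ where $v$ generates $\Lambda\cap\mathrm{span}\{b-a\}$ and is a positive multiple of $b-a$. The lattice diameter $\mathrm{diam}_\Lambda(C)$ is the maximum lattice length of a lattice segment in $C$. A diameter direction of $C$ is a vector $v\in\Lambda\setminus\{0\}$ such that $C$ contains a segment $[a,a+\mathrm{diam}_\Lambda(C)\,v]$. $C$ is lattice complete if no convex body $C'\supsetneq C$ has $\mathrm{diam}_\Lambda(C')=\mathrm{diam}_\Lambda(C)$. *)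

theory Defs
  imports "HOL-Analysis.Analysis"
begin

definition convex_body :: "'a::euclidean_space set \<Rightarrow> bool" where
  "convex_body C \<longleftrightarrow> compact C \<and> convex C \<and> interior C \<noteq> {}"

definition is_lattice :: "'a::euclidean_space set \<Rightarrow> bool" where
  "is_lattice L \<longleftrightarrow> 0 \<in> L \<and> (\<forall>x\<in>L. \<forall>y\<in>L. x + y \<in> L) \<and> (\<forall>x\<in>L. - x \<in> L)
     \<and> (\<forall>x\<in>L. \<exists>e>0. ball x e \<inter> L = {x}) \<and> span L = UNIV"

definition lattice_segment :: "'a::euclidean_space set \<Rightarrow> 'a \<Rightarrow> 'a \<Rightarrow> bool" where
  "lattice_segment L a b \<longleftrightarrow> (\<exists>v\<in>L. v \<noteq> 0 \<and> (\<exists>t::real. b - a = t *\<^sub>R v))"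

definition lattice_length :: "'a::euclidean_space set \<Rightarrow> 'a \<Rightarrow> 'a \<Rightarrow> real" where
  "lattice_length L a b =
     norm (b - a) / norm (THE v. v \<in> L \<and> (\<exists>c>0. v = c *\<^sub>R (b - a)) \<and>
                          L \<inter> span {b - a} = range (\<lambda>n::int. of_int n *\<^sub>R v))"

definition lattice_diam :: "'a::euclidean_space set \<Rightarrow> 'a set \<Rightarrow> real" where
  "lattice_diam L C = Sup {lattice_length L a b | a b. a \<in> C \<and> b \<in> C \<and> lattice_segment L a b}"

definition diameter_directions :: "'a::euclidean_space set \<Rightarrow> 'a set \<Rightarrow> 'a set" where
  "diameter_directions L C =
     {v \<in> L. v \<noteq> 0 \<and> (\<exists>a. closed_segment a (a + lattice_diam L C *\<^sub>R v) \<subseteq> C)}"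

definition lattice_complete :: "'a::euclidean_space set \<Rightarrow> 'a set \<Rightarrow> bool" where
  "lattice_complete L C \<longleftrightarrow>
     \<not> (\<exists>C'. convex_body C' \<and> C \<subset> C' \<and> lattice_diam L C' = lattice_diam L C)"

end

theory Submission
  imports Defs
begin

definition grp :: "'a::real_normed_vector set \<Rightarrow> bool" where
  "grp G \<longleftrightarrow> 0 \<in> G \<and> (\<forall>x\<in>G. \<forall>y\<in>G. x + y \<in> G) \<and> (\<forall>x\<in>G. - x \<in> G)"

definition udisc :: "'a::real_normed_vector set \<Rightarrow> real \<Rightarrow> bool" where
  "udisc G e \<longleftrightarrow> e > 0 \<and> (\<forall>x\<in>G. x \<noteq> 0 \<longrightarrow> e \<le> norm x)"

lemma grp_0: "grp G \<Longrightarrow> 0 \<in> G" by (simp add: grp_def)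
lemma grp_add: "grp G \<Longrightarrow> x \<in> G \<Longrightarrow> y \<in> G \<Longrightarrow> x + y \<in> G" by (simp add: grp_def)
lemma grp_uminus: "grp G \<Longrightarrow> x \<in> G \<Longrightarrow> - x \<in> G" by (simp add: grp_def)
lemma grp_diff: "grp G \<Longrightarrow> x \<in> G \<Longrightarrow> y \<in> G \<Longrightarrow> x - y \<in> G"
  using grp_add[of G x "-y"] grp_uminus[of G y] by simp

lemma grp_nat_mult: "grp G \<Longrightarrow> x \<in> G \<Longrightarrow> of_nat n *\<^sub>R x \<in> G"
proof (induction n)
  case 0 then show ?case by (simp add: grp_0)
next
  case (Suc n)
  then have "of_nat n *\<^sub>R x + x \<in> G" using grp_add by blast
  then show ?case by (simp add: algebra_simps)
qed

lemma grp_int_mult: "grp G \<Longrightarrow> x \<in> G \<Longrightarrow> of_int n *\<^sub>R x \<in> G"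
proof (cases "n \<ge> 0")
  case True
  assume "grp G" "x \<in> G"
  then have "of_nat (nat n) *\<^sub>R x \<in> G" by (rule grp_nat_mult)
  then show ?thesis using True by simp
next
  case False
  assume "grp G" "x \<in> G"
  then have "- (of_nat (nat (-n)) *\<^sub>R x) \<in> G" by (intro grp_uminus grp_nat_mult)
  then show ?thesis using False by simp
qed

lemma lattice_grp: "is_lattice L \<Longrightarrow> grp L"
  by (simp add: is_lattice_def grp_def)

lemma lattice_udisc: assumes "is_lattice L" shows "\<exists>e. udisc L e"
proof -
  have "0 \<in> L" using assms by (simp add: is_lattice_def)
  then obtain e where e: "e > 0" "ball 0 e \<inter> L = {0}" using assms unfolding is_lattice_def by blast
  have "\<forall>x\<in>L. x \<noteq> 0 \<longrightarrow> e \<le> norm x"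
  proof (intro ballI impI)
    fix x assume "x \<in> L" "x \<noteq> 0"
    then have "x \<notin> ball 0 e" using e by blast
    then show "e \<le> norm x" by (simp add: dist_norm)
  qed
  then show ?thesis using e unfolding udisc_def by blast
qed

lemma udisc_sep:
  assumes "grp G" "udisc G e" "x \<in> G" "y \<in> G" "x \<noteq> y"
  shows "e \<le> dist x y"
proof -
  have "x - y \<in> G" "x - y \<noteq> 0" using assms grp_diff by auto
  then show ?thesis using assms(2) by (simp add: udisc_def dist_norm)
qed

lemma udisc_closed:
  assumes "grp G" "udisc G e" shows "closed G"
proof (rule discrete_imp_closed[of e])
  show "0 < e" using assms by (simp add: udisc_def)
  show "\<forall>x\<in>G. \<forall>y\<in>G. dist y x < e \<longrightarrow> y = x"
    using udisc_sep[OF assms] by (meson not_le)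
qed

lemma udisc_finite_bounded:
  fixes G :: "'a::euclidean_space set"
  assumes "grp G" "udisc G e" "bounded S"
  shows "finite (G \<inter> S)"
proof (rule ccontr)
  assume inf: "infinite (G \<inter> S)"
  have bd: "bounded (G \<inter> S)" using assms(3) by (simp add: bounded_Int)
  obtain x where x: "x islimpt (G \<inter> S)"
    using bounded_infinite_imp_islimpt[of "G \<inter> S" "G \<inter> S"] inf bd by blast
  have e: "e > 0" using assms by (simp add: udisc_def)
  obtain x1 where x1: "x1 \<in> G \<inter> S" "x1 \<noteq> x" "dist x1 x < e/2"
    using x e unfolding islimpt_approachable by (meson half_gt_zero)
  have "dist x1 x > 0" using x1 by simp
  then obtain x2 where x2: "x2 \<in> G \<inter> S" "x2 \<noteq> x" "dist x2 x < min (e/2) (dist x1 x)"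
    using x e unfolding islimpt_approachable by (metis half_gt_zero min_less_iff_conj)
  have "x2 \<noteq> x1" using x2 by auto
  then have "e \<le> dist x2 x1" using udisc_sep[OF assms(1,2)] x1 x2 by blast
  moreover have "dist x2 x1 < e" using x1 x2 dist_triangle_half_l[of x2 x e x1]
    by (smt (verit) dist_commute dist_triangle)
  ultimately show False by simp
qed

lemma prim_exists:
  fixes G :: "'a::euclidean_space set"
  assumes G: "grp G" "udisc G e" and v: "v \<in> G" "v \<noteq> 0" and d: "d = t *\<^sub>R v" "d \<noteq> 0"
  shows "\<exists>g. g \<in> G \<and> (\<exists>c>0. g = c *\<^sub>R d) \<and> G \<inter> span {d} = range (\<lambda>n::int. of_int n *\<^sub>R g)"
proof -
  have t0: "t \<noteq> 0" using d by auto
  obtain c0 where c0: "c0 > 0" "c0 *\<^sub>R d \<in> G"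
  proof (cases "t > 0")
    case True
    have "(1/t) *\<^sub>R d = v" using d t0 by simp
    then show ?thesis using that[of "1/t"] True v by simp
  next
    case False
    then have "t < 0" using t0 by simp
    have "(-1/t) *\<^sub>R d = - v" using d t0 by simp
    have "0 < -1/t" using \<open>t < 0\<close> by simp
    moreover have "- v \<in> G" using v G grp_uminus by blast
    ultimately show ?thesis using that[of "-1/t"] \<open>(-1/t) *\<^sub>R d = - v\<close> by simp
  qed
  define A where "A = {x \<in> G. \<exists>c. 0 < c \<and> c \<le> c0 \<and> x = c *\<^sub>R d}"
  have "A \<subseteq> G \<inter> cball 0 (c0 * norm d)"
    unfolding A_def by (auto intro!: mult_right_mono)
  then have finA: "finite A" using udisc_finite_bounded[OF G, of "cball 0 (c0 * norm d)"]
    by (meson bounded_cball finite_subset)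
  have "c0 *\<^sub>R d \<in> A" using c0 unfolding A_def by auto
  then have neA: "A \<noteq> {}" by auto
  define m where "m = Min (norm ` A)"
  have "m \<in> norm ` A" unfolding m_def using finA neA by simp
  then obtain g where gA: "g \<in> A" "norm g = m" by auto
  have gmin: "\<And>y. y \<in> A \<Longrightarrow> norm g \<le> norm y" unfolding gA(2) m_def using finA by simp
  obtain c where c: "0 < c" "c \<le> c0" "g = c *\<^sub>R d" "g \<in> G" using gA(1) unfolding A_def by auto
  have "G \<inter> span {d} = range (\<lambda>n::int. of_int n *\<^sub>R g)"
  proof
    show "G \<inter> span {d} \<subseteq> range (\<lambda>n::int. of_int n *\<^sub>R g)"
    proof
      fix x assume x: "x \<in> G \<inter> span {d}"
      then obtain s where s: "x = s *\<^sub>R d" by (auto simp: span_singleton)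
      define r where "r = s / c"
      have xr: "x = r *\<^sub>R g" using s c unfolding r_def by simp
      define y where "y = x - of_int \<lfloor>r\<rfloor> *\<^sub>R g"
      have yG: "y \<in> G" unfolding y_def using x c(4) G grp_diff grp_int_mult by blast
      have yeq: "y = ((r - of_int \<lfloor>r\<rfloor>) * c) *\<^sub>R d" unfolding y_def xr c(3) by (simp add: algebra_simps)
      have "r - of_int \<lfloor>r\<rfloor> = 0"
      proof (rule ccontr)
        assume ne: "r - of_int \<lfloor>r\<rfloor> \<noteq> 0"
        have f0: "0 \<le> r - of_int \<lfloor>r\<rfloor>" "r - of_int \<lfloor>r\<rfloor> < 1" by linarith+
        then have "0 < r - of_int \<lfloor>r\<rfloor>" using ne by linarith
        then have pos: "0 < (r - of_int \<lfloor>r\<rfloor>) * c" using c by simp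
        have lt: "(r - of_int \<lfloor>r\<rfloor>) * c < c" using f0 c by simp
        have "(r - of_int \<lfloor>r\<rfloor>) * c \<le> c0" using lt c by linarith
        then have "y \<in> A" unfolding A_def using yG yeq pos by blast
        then have "norm g \<le> norm y" by (rule gmin)
        moreover have "norm y < norm g" using yeq c(3) pos lt d(2) f0 by simp
        ultimately show False by simp
      qed
      then have "x = of_int \<lfloor>r\<rfloor> *\<^sub>R g" using xr by simp
      then show "x \<in> range (\<lambda>n::int. of_int n *\<^sub>R g)" by blast
    qed
  next
    show "range (\<lambda>n::int. of_int n *\<^sub>R g) \<subseteq> G \<inter> span {d}"
    proof
      fix x assume "x \<in> range (\<lambda>n::int. of_int n *\<^sub>R g)"
      then obtain n::int where n: "x = of_int n *\<^sub>R g" by auto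
      have "x \<in> G" using n c(4) G grp_int_mult by blast
      moreover have "x = (of_int n * c) *\<^sub>R d" using n c(3) by simp
      then have "x \<in> span {d}" by (simp add: span_scale span_base)
      ultimately show "x \<in> G \<inter> span {d}" by blast
    qed
  qed
  then show ?thesis using c by blast
qed

lemma prim_unique:
  fixes d :: "'a::euclidean_space"
  assumes "d \<noteq> 0"
    and g1: "g1 \<in> G" "c1 > 0" "g1 = c1 *\<^sub>R d" "G \<inter> span {d} = range (\<lambda>n::int. of_int n *\<^sub>R g1)"
    and g2: "g2 \<in> G" "c2 > 0" "g2 = c2 *\<^sub>R d" "G \<inter> span {d} = range (\<lambda>n::int. of_int n *\<^sub>R g2)"
  shows "g1 = g2"
proof -
  have "g1 \<in> span {d}" unfolding g1(3) by (simp add: span_scale span_base)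
  then have "g1 \<in> G \<inter> span {d}" using g1(1) by blast
  then obtain n::int where n: "g1 = of_int n *\<^sub>R g2" using g2(4) by auto
  have "g2 \<in> span {d}" unfolding g2(3) by (simp add: span_scale span_base)
  then have "g2 \<in> G \<inter> span {d}" using g2(1) by blast
  then obtain m::int where m: "g2 = of_int m *\<^sub>R g1" using g1(4) by auto
  have "c1 = of_int n * c2" using n g1(3) g2(3) assms(1) by (metis scaleR_cancel_right scaleR_scaleR)
  have "c2 = of_int m * c1" using m g1(3) g2(3) assms(1) by (metis scaleR_cancel_right scaleR_scaleR)
  have "n > 0" using \<open>c1 = of_int n * c2\<close> g1(2) g2(2) by (smt (verit) mult_nonpos_nonneg of_int_le_0_iff)
  have "m > 0" using \<open>c2 = of_int m * c1\<close> g1(2) g2(2) by (smt (verit) mult_nonpos_nonneg of_int_le_0_iff)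
  have "of_int n * of_int m = (1::real)" using \<open>c1 = of_int n * c2\<close> \<open>c2 = of_int m * c1\<close> g1(2)
    by (metis mult.assoc mult_cancel_right1 mult.commute less_irrefl)
  then have "n * m = 1" by (metis of_int_eq_1_iff of_int_mult)
  then have "n = 1" using \<open>n > 0\<close> \<open>m > 0\<close> by (simp add: zmult_eq_1_iff)
  then show ?thesis using n by simp
qed

lemma len_char:
  fixes L :: "'a::euclidean_space set"
  assumes L: "is_lattice L" and ab: "b \<noteq> a" "lattice_segment L a b"
  shows "\<exists>g c. g \<in> L \<and> c > 0 \<and> g = c *\<^sub>R (b - a) \<and> lattice_length L a b = 1 / c
     \<and> L \<inter> span {b - a} = range (\<lambda>n::int. of_int n *\<^sub>R g)"
proof -
  obtain e where e: "udisc L e" using lattice_udisc[OF L] by blast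
  obtain v t where vt: "v \<in> L" "v \<noteq> 0" "b - a = t *\<^sub>R v" using ab unfolding lattice_segment_def by blast
  have d0: "b - a \<noteq> 0" using ab by simp
  obtain g where g: "g \<in> L" "\<exists>c>0. g = c *\<^sub>R (b - a)" "L \<inter> span {b - a} = range (\<lambda>n::int. of_int n *\<^sub>R g)"
    using prim_exists[OF lattice_grp[OF L] e vt(1,2) vt(3) d0] by blast
  obtain c where c: "c > 0" "g = c *\<^sub>R (b - a)" using g by blast
  have the: "(THE v. v \<in> L \<and> (\<exists>c>0. v = c *\<^sub>R (b - a)) \<and>
                          L \<inter> span {b - a} = range (\<lambda>n::int. of_int n *\<^sub>R v)) = g"
  proof (rule the_equality)
    show "g \<in> L \<and> (\<exists>c>0. g = c *\<^sub>R (b - a)) \<and> L \<inter> span {b - a} = range (\<lambda>n::int. of_int n *\<^sub>R g)"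
      using g by blast
    fix v assume "v \<in> L \<and> (\<exists>c>0. v = c *\<^sub>R (b - a)) \<and> L \<inter> span {b - a} = range (\<lambda>n::int. of_int n *\<^sub>R v)"
    then obtain c' where "v \<in> L" "c' > 0" "v = c' *\<^sub>R (b - a)" "L \<inter> span {b - a} = range (\<lambda>n::int. of_int n *\<^sub>R v)"
      by blast
    then show "v = g" using prim_unique[OF d0 _ _ _ _ g(1) c(1) c(2) g(3)] by blast
  qed
  have "lattice_length L a b = norm (b - a) / norm g" unfolding lattice_length_def the ..
  also have "\<dots> = 1 / c" using c d0 by simp
  finally show ?thesis using g(1) g(3) c by blast
qed

lemma len_same: "lattice_length L a a = 0"
  by (simp add: lattice_length_def)

lemma len_lower:
  fixes L :: "'a::euclidean_space set"
  assumes L: "is_lattice L" and w: "w \<in> L" "w \<noteq> 0" and s: "s > 0"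
  shows "s \<le> lattice_length L a (a + s *\<^sub>R w)"
proof -
  let ?b = "a + s *\<^sub>R w"
  have ne: "?b \<noteq> a" using w s by simp
  have seg: "lattice_segment L a ?b" unfolding lattice_segment_def using w by auto
  obtain g c where g: "g \<in> L" "c > 0" "g = c *\<^sub>R (?b - a)" "lattice_length L a ?b = 1 / c"
     "L \<inter> span {?b - a} = range (\<lambda>n::int. of_int n *\<^sub>R g)"
    using len_char[OF L ne seg] by blast
  have "w \<in> span {?b - a}"
  proof -
    have "w = (1/s) *\<^sub>R (?b - a)" using s by simp
    then show ?thesis by (metis span_scale span_base singletonI)
  qed
  then obtain n::int where n: "w = of_int n *\<^sub>R g" using w(1) g(5) by blast
  have "w = (s * of_int n * c) *\<^sub>R w"
  proof -
    have "w = of_int n *\<^sub>R (c *\<^sub>R (s *\<^sub>R w))" using n g(3) by simp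
    also have "\<dots> = (s * of_int n * c) *\<^sub>R w" by (simp add: algebra_simps)
    finally show ?thesis .
  qed
  then have "1 *\<^sub>R w = (s * of_int n * c) *\<^sub>R w" by simp
  then have "s * of_int n * c = 1" using w(2)
    by (metis scaleR_cancel_right)
  then have "lattice_length L a ?b = s * of_int n" using g(4) g(2)
    by (metis mult.commute mult.left_commute nonzero_mult_div_cancel_left div_by_1 less_irrefl)
  moreover have "n \<ge> 1"
  proof -
    have "s * of_int n * c > 0" using \<open>s * of_int n * c = 1\<close> by simp
    then have "of_int n > (0::real)" using s g(2) by (simp add: zero_less_mult_iff)
    then show ?thesis by simp
  qed
  ultimately show ?thesis using s by simp
qed

lemma len_upper:
  fixes L :: "'a::euclidean_space set"
  assumes L: "is_lattice L" and ab: "b \<noteq> a" "lattice_segment L a b"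
  shows "\<exists>g. g \<in> L \<and> g \<noteq> 0 \<and> lattice_length L a b > 0 \<and> b = a + lattice_length L a b *\<^sub>R g"
proof -
  obtain g c where g: "g \<in> L" "c > 0" "g = c *\<^sub>R (b - a)" "lattice_length L a b = 1 / c"
    using len_char[OF L ab] by blast
  have "b = a + (1/c) *\<^sub>R g" using g by simp
  moreover have "g \<noteq> 0" using g ab by simp
  ultimately show ?thesis using g by auto
qed

lemma lattice_nonzero:
  fixes L :: "'a::euclidean_space set"
  assumes "is_lattice L" obtains w where "w \<in> L" "w \<noteq> 0"
proof -
  have "\<not> L \<subseteq> {0}"
  proof
    assume "L \<subseteq> {0}"
    then have "span L \<subseteq> {0}" using span_mono[of L "{0}"] by simp
    moreover have "span L = UNIV" using assms by (simp add: is_lattice_def)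
    moreover obtain b :: 'a where "b \<in> Basis" using nonempty_Basis by blast
    then have "b \<noteq> 0" by auto
    ultimately show False by auto
  qed
  then show ?thesis using that by blast
qed

lemma LS_bdd:
  fixes L K :: "'a::euclidean_space set"
  assumes L: "is_lattice L" and K: "bounded K"
  shows "bdd_above {lattice_length L a b | a b. a \<in> K \<and> b \<in> K \<and> lattice_segment L a b}"
proof -
  obtain e where e: "udisc L e" using lattice_udisc[OF L] by blast
  then have e0: "e > 0" by (simp add: udisc_def)
  obtain R where R: "\<forall>x\<in>K. norm x \<le> R" using K bounded_iff by blast
  show ?thesis unfolding bdd_above_def
  proof (intro exI[of _ "2 * R / e"] ballI)
    fix x assume "x \<in> {lattice_length L a b | a b. a \<in> K \<and> b \<in> K \<and> lattice_segment L a b}"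
    then obtain a b where ab: "x = lattice_length L a b" "a \<in> K" "b \<in> K" "lattice_segment L a b" by blast
    have R0: "0 \<le> R" using R ab(2) norm_ge_zero order_trans by blast
    show "x \<le> 2 * R / e"
    proof (cases "b = a")
      case True then show ?thesis using ab(1) R0 e0 by (simp add: len_same)
    next
      case False
      obtain g where g: "g \<in> L" "g \<noteq> 0" "x > 0" "b = a + x *\<^sub>R g" using len_upper[OF L False ab(4)] ab(1) by blast
      have "e \<le> norm g" using e g by (simp add: udisc_def)
      have "norm a \<le> R" "norm b \<le> R" using R ab(2,3) by auto
      then have "norm (b - a) \<le> 2 * R" using norm_triangle_ineq4[of b a] by linarith
      moreover have "norm (b - a) = x * norm g" using g by simp
      moreover have "x * e \<le> x * norm g" using \<open>e \<le> norm g\<close> g(3) by (simp add: mult_left_mono)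
      ultimately have "x * e \<le> 2 * R" by linarith
      then show ?thesis using e0 by (simp add: field_simps)
    qed
  qed
qed

lemma chord_le_diam:
  fixes L K :: "'a::euclidean_space set"
  assumes L: "is_lattice L" and K: "bounded K" and a: "a \<in> K" "a + s *\<^sub>R w \<in> K"
    and w: "w \<in> L" "w \<noteq> 0" and s: "s > 0"
  shows "s \<le> lattice_diam L K"
proof -
  have "lattice_segment L a (a + s *\<^sub>R w)" unfolding lattice_segment_def using w by auto
  then have "lattice_length L a (a + s *\<^sub>R w) \<in> {lattice_length L a b | a b. a \<in> K \<and> b \<in> K \<and> lattice_segment L a b}"
    using a by (intro CollectI exI[of _ a] exI[of _ "a + s *\<^sub>R w"]) simp
  then have "lattice_length L a (a + s *\<^sub>R w) \<le> lattice_diam L K"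
    unfolding lattice_diam_def using LS_bdd[OF L K] by (rule cSup_upper)
  then show ?thesis using len_lower[OF L w s, of a] by simp
qed

lemma diam_le:
  fixes L K :: "'a::euclidean_space set"
  assumes L: "is_lattice L" and K: "K \<noteq> {}" and d: "0 \<le> d"
    and ch: "\<And>a t g. a \<in> K \<Longrightarrow> a + t *\<^sub>R g \<in> K \<Longrightarrow> g \<in> L \<Longrightarrow> g \<noteq> 0 \<Longrightarrow> t > 0 \<Longrightarrow> t \<le> d"
  shows "lattice_diam L K \<le> d"
  unfolding lattice_diam_def
proof (rule cSup_least)
  obtain a where "a \<in> K" using K by blast
  moreover have "lattice_segment L a a"
  proof -
    obtain w where "w \<in> L" "w \<noteq> 0" using lattice_nonzero[OF L] by blast
    then show ?thesis unfolding lattice_segment_def by (intro bexI[of _ w]) auto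
  qed
  ultimately show "{lattice_length L a b | a b. a \<in> K \<and> b \<in> K \<and> lattice_segment L a b} \<noteq> {}" by blast
next
  fix x assume "x \<in> {lattice_length L a b | a b. a \<in> K \<and> b \<in> K \<and> lattice_segment L a b}"
  then obtain a b where ab: "x = lattice_length L a b" "a \<in> K" "b \<in> K" "lattice_segment L a b" by blast
  show "x \<le> d"
  proof (cases "b = a")
    case True then show ?thesis using ab(1) d by (simp add: len_same)
  next
    case False
    obtain g where g: "g \<in> L" "g \<noteq> 0" "x > 0" "b = a + x *\<^sub>R g" using len_upper[OF L False ab(4)] ab(1) by blast
    have "a + x *\<^sub>R g \<in> K" using ab(3) g(4) by simp
    then show ?thesis using ch[of a x g] g(1-3) ab(2) by blast
  qed
qed

lemma diam_mono:
  fixes L K :: "'a::euclidean_space set"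
  assumes L: "is_lattice L" and "K \<subseteq> K'" "K \<noteq> {}" "bounded K'"
  shows "lattice_diam L K \<le> lattice_diam L K'"
  unfolding lattice_diam_def
proof (rule cSup_subset_mono)
  obtain a where "a \<in> K" using assms by blast
  moreover have "lattice_segment L a a"
  proof -
    obtain w where "w \<in> L" "w \<noteq> 0" using lattice_nonzero[OF L] by blast
    then show ?thesis unfolding lattice_segment_def by (intro bexI[of _ w]) auto
  qed
  ultimately show "{lattice_length L a b | a b. a \<in> K \<and> b \<in> K \<and> lattice_segment L a b} \<noteq> {}" by blast
  show "bdd_above {lattice_length L a b | a b. a \<in> K' \<and> b \<in> K' \<and> lattice_segment L a b}"
    using LS_bdd[OF L assms(4)] .
  show "{lattice_length L a b | a b. a \<in> K \<and> b \<in> K \<and> lattice_segment L a b}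
    \<subseteq> {lattice_length L a b | a b. a \<in> K' \<and> b \<in> K' \<and> lattice_segment L a b}" using assms(2) by blast
qed

lemma diam_pos:
  fixes L C :: "'a::euclidean_space set"
  assumes L: "is_lattice L" and C: "convex_body C"
  shows "lattice_diam L C > 0"
proof -
  obtain x where "x \<in> interior C" using C unfolding convex_body_def by blast
  then obtain r where r: "r > 0" "ball x r \<subseteq> C" by (auto simp: mem_interior)
  obtain w where w: "w \<in> L" "w \<noteq> 0" using lattice_nonzero[OF L] by blast
  define s where "s = r / (2 * norm w)"
  have s0: "s > 0" using r w unfolding s_def by simp
  have "norm (s *\<^sub>R w) < r" using r w unfolding s_def by simp
  then have "x + s *\<^sub>R w \<in> C" using r by (auto simp: dist_norm)
  moreover have "x \<in> C" using r by auto
  moreover have "bounded C" using C unfolding convex_body_def by (simp add: compact_imp_bounded)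
  ultimately have "s \<le> lattice_diam L C" using chord_le_diam[OF L] w s0 by blast
  then show ?thesis using s0 by simp
qed

lemma DD_char:
  fixes L C :: "'a::euclidean_space set"
  assumes "convex C"
  shows "diameter_directions L C = {w \<in> L. w \<noteq> 0 \<and> (\<exists>a. a \<in> C \<and> a + lattice_diam L C *\<^sub>R w \<in> C)}"
  unfolding diameter_directions_def
proof (rule Collect_cong)
  fix w
  have "(\<exists>a. closed_segment a (a + lattice_diam L C *\<^sub>R w) \<subseteq> C) \<longleftrightarrow> (\<exists>a. a \<in> C \<and> a + lattice_diam L C *\<^sub>R w \<in> C)"
  proof
  assume "\<exists>a. closed_segment a (a + lattice_diam L C *\<^sub>R w) \<subseteq> C"
  then show "\<exists>a. a \<in> C \<and> a + lattice_diam L C *\<^sub>R w \<in> C" using ends_in_segment by blast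
  next
  assume "\<exists>a. a \<in> C \<and> a + lattice_diam L C *\<^sub>R w \<in> C"
  then show "\<exists>a. closed_segment a (a + lattice_diam L C *\<^sub>R w) \<subseteq> C"
    using closed_segment_subset assms by blast
  qed
  then show "(w \<in> L \<and> w \<noteq> 0 \<and> (\<exists>a. closed_segment a (a + lattice_diam L C *\<^sub>R w) \<subseteq> C)) =
          (w \<in> L \<and> w \<noteq> 0 \<and> (\<exists>a. a \<in> C \<and> a + lattice_diam L C *\<^sub>R w \<in> C))" by simp
qed

lemma red_classes:
  assumes "finite S"
    and refl: "\<forall>x\<in>S. R x x" and sym: "\<forall>x\<in>S. \<forall>y\<in>S. R x y \<longrightarrow> R y x"
    and trans: "\<forall>x\<in>S. \<forall>y\<in>S. \<forall>z\<in>S. R x y \<longrightarrow> R y z \<longrightarrow> R x z"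
    and two: "\<forall>x\<in>S. \<forall>y\<in>S. \<forall>z\<in>S. R x y \<longrightarrow> R x z \<longrightarrow> y \<noteq> x \<longrightarrow> z \<noteq> x \<longrightarrow> y = z"
  shows "\<exists>S'\<subseteq>S. (\<forall>x\<in>S'. \<forall>y\<in>S'. R x y \<longrightarrow> x = y) \<and> card S \<le> 2 * card S'"
  using assms
proof (induction "card S" arbitrary: S rule: less_induct)
  case less
  show ?case
  proof (cases "S = {}")
    case True then show ?thesis by auto
  next
    case False
    then obtain x where x: "x \<in> S" by blast
    define K where "K = {y\<in>S. R x y}"
    define S1 where "S1 = S - K"
    have xK: "x \<in> K" using x less.prems(2) unfolding K_def by blast
    have finK: "finite K" using less.prems(1) unfolding K_def by simp
    have fin1: "finite S1" using less.prems(1) unfolding S1_def by simp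
    have ss: "S1 \<subset> S" unfolding S1_def using xK x by blast
    have lt: "card S1 < card S" using psubset_card_mono[OF less.prems(1) ss] .
    have sub1: "S1 \<subseteq> S" using ss by blast
    have h2: "\<forall>x\<in>S1. R x x" using less.prems(2) sub1 by blast
    have h3: "\<forall>x\<in>S1. \<forall>y\<in>S1. R x y \<longrightarrow> R y x" using less.prems(3) sub1 by blast
    have h4: "\<forall>x\<in>S1. \<forall>y\<in>S1. \<forall>z\<in>S1. R x y \<longrightarrow> R y z \<longrightarrow> R x z" using less.prems(4) sub1 by blast
    have h5: "\<forall>x\<in>S1. \<forall>y\<in>S1. \<forall>z\<in>S1. R x y \<longrightarrow> R x z \<longrightarrow> y \<noteq> x \<longrightarrow> z \<noteq> x \<longrightarrow> y = z"
      using less.prems(5) sub1 by blast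
    obtain S1' where S1': "S1' \<subseteq> S1" "\<forall>x\<in>S1'. \<forall>y\<in>S1'. R x y \<longrightarrow> x = y" "card S1 \<le> 2 * card S1'"
      using less.hyps[OF lt fin1 h2 h3 h4 h5] by blast
    have cK: "card K \<le> 2"
    proof (cases "K = {x}")
      case True then show ?thesis by simp
    next
      case False
      then obtain y where y: "y \<in> K" "y \<noteq> x" using xK by blast
      have "K \<subseteq> {x, y}"
      proof
        fix z assume z: "z \<in> K"
        show "z \<in> {x, y}"
        proof (cases "z = x")
          case True then show ?thesis by simp
        next
          case False
          then have "y = z" using less.prems(5) y z x unfolding K_def by blast
          then show ?thesis by simp
        qed
      qed
      then have "card K \<le> card {x, y}" by (simp add: card_mono)
      also have "\<dots> \<le> 2" by (simp add: card_insert_le_m1)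
      finally show ?thesis .
    qed
    define S' where "S' = insert x S1'"
    have xS1': "x \<notin> S1'" using S1'(1) xK unfolding S1_def by blast
    have finS1': "finite S1'" using S1'(1) fin1 finite_subset by blast
    have "card S = card K + card S1"
    proof -
      have "S = K \<union> S1" "K \<inter> S1 = {}" unfolding S1_def K_def by auto
      then show ?thesis using finK fin1 by (simp add: card_Un_disjoint)
    qed
    also have "\<dots> \<le> 2 + 2 * card S1'" using cK S1'(3) by simp
    also have "\<dots> = 2 * card S'" unfolding S'_def using xS1' finS1' by simp
    finally have c: "card S \<le> 2 * card S'" .
    have sub: "S' \<subseteq> S" unfolding S'_def using S1'(1) x unfolding S1_def by blast
    have "\<forall>u\<in>S'. \<forall>v\<in>S'. R u v \<longrightarrow> u = v"
    proof (intro ballI impI)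
      fix u v assume uv: "u \<in> S'" "v \<in> S'" "R u v"
      show "u = v"
      proof (cases "u = x \<or> v = x")
        case True
        show ?thesis
        proof (rule ccontr)
          assume "u \<noteq> v"
          then have "(u = x \<and> v \<in> S1') \<or> (v = x \<and> u \<in> S1')" using True uv unfolding S'_def by auto
          then show False
          proof
            assume a: "u = x \<and> v \<in> S1'"
            then have "v \<in> K" unfolding K_def using uv(3) S1'(1) sub1 unfolding S1_def by blast
            then show False using a S1'(1) unfolding S1_def by blast
          next
            assume a: "v = x \<and> u \<in> S1'"
            then have "u \<in> S" using S1'(1) sub1 by blast
            then have "R x u" using a uv(3) less.prems(3) x by blast
            then have "u \<in> K" unfolding K_def using \<open>u \<in> S\<close> by blast
            then show False using a S1'(1) unfolding S1_def by blast
          qed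
        qed
      next
        case False
        then have "u \<in> S1'" "v \<in> S1'" using uv unfolding S'_def by auto
        then show ?thesis using S1'(2) uv(3) by blast
      qed
    qed
    then show ?thesis using sub c by blast
  qed
qed

lemma proj_facts:
  fixes g :: "'a::euclidean_space"
  assumes g: "g \<noteq> 0" and p_def: "p = (\<lambda>x. x - ((x \<bullet> g) / (g \<bullet> g)) *\<^sub>R g)"
  shows "p (x + y) = p x + p y" "p (- x) = - p x" "p (x - y) = p x - p y"
    "p (c *\<^sub>R x) = c *\<^sub>R p x" "p x \<bullet> g = 0" "p (x + t *\<^sub>R g) = p x"
    "p x = 0 \<Longrightarrow> x = ((x \<bullet> g) / (g \<bullet> g)) *\<^sub>R g" "p 0 = 0"
proof -
  have gg: "g \<bullet> g \<noteq> 0" using g by simp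
  show "p (x + y) = p x + p y" unfolding p_def by (simp add: inner_add_left add_divide_distrib algebra_simps)
  show "p (- x) = - p x" unfolding p_def by (simp add: algebra_simps)
  show "p (x - y) = p x - p y" unfolding p_def by (simp add: inner_diff_left diff_divide_distrib algebra_simps)
  show "p (c *\<^sub>R x) = c *\<^sub>R p x" unfolding p_def by (simp add: algebra_simps)
  show "p x \<bullet> g = 0" unfolding p_def using gg by (simp add: inner_diff_left)
  show "p (x + t *\<^sub>R g) = p x" unfolding p_def using gg
    by (simp add: inner_add_left add_divide_distrib algebra_simps)
  show "p x = 0 \<Longrightarrow> x = ((x \<bullet> g) / (g \<bullet> g)) *\<^sub>R g" unfolding p_def by simp
  show "p 0 = 0" unfolding p_def by simp
qed

lemma count_classes:
  fixes G :: "'a::euclidean_space set"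
  shows "grp G \<Longrightarrow> udisc G e \<Longrightarrow> dim G \<le> n \<Longrightarrow> finite S \<Longrightarrow> S \<subseteq> G \<Longrightarrow>
    (\<forall>x\<in>S. \<forall>y\<in>S. x \<noteq> y \<longrightarrow> \<not>(\<exists>z\<in>G. x - y = 2 *\<^sub>R z)) \<Longrightarrow> card S \<le> 2 ^ n"
proof (induction n arbitrary: G e S)
  case 0
  then have "G \<subseteq> {0}" by simp
  then have "S \<subseteq> {0}" using 0 by blast
  then have "card S \<le> card {0::'a}" by (intro card_mono) auto
  then show ?case by simp
next
  case (Suc n)
  note G = Suc.prems(1,2)
  show ?case
  proof (cases "G \<subseteq> {0}")
    case True
    then have "S \<subseteq> {0}" using Suc.prems by blast
    then have "card S \<le> card {0::'a}" by (intro card_mono) auto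
    then have "card S \<le> 1" by simp
    moreover have "(1::nat) \<le> 2 ^ Suc n" by (rule one_le_power) simp
    ultimately show ?thesis by linarith
  next
    case False
    then obtain x0 where x0: "x0 \<in> G" "x0 \<noteq> 0" by blast
    define A where "A = (G \<inter> cball 0 (norm x0)) - {0}"
    have finA: "finite A" unfolding A_def using udisc_finite_bounded[OF G] by simp
    have x0A: "x0 \<in> A" unfolding A_def using x0 by simp
    define m where "m = Min (norm ` A)"
    have "m \<in> norm ` A" unfolding m_def using finA x0A by (intro Min_in) auto
    then obtain g where gA: "g \<in> A" "norm g = m" by auto
    have gmin0: "\<And>y. y \<in> A \<Longrightarrow> norm g \<le> norm y" unfolding gA(2) m_def using finA by simp
    have gG: "g \<in> G" and g0: "g \<noteq> 0" using gA(1) unfolding A_def by auto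
    have gmin: "\<And>x. x \<in> G \<Longrightarrow> x \<noteq> 0 \<Longrightarrow> norm g \<le> norm x"
    proof -
      fix x assume x: "x \<in> G" "x \<noteq> 0"
      show "norm g \<le> norm x"
      proof (cases "norm x \<le> norm x0")
        case True then have "x \<in> A" unfolding A_def using x by simp
        then show ?thesis by (rule gmin0)
      next
        case False then show ?thesis using gmin0[OF x0A] by simp
      qed
    qed
    have kern: "\<And>x r. x \<in> G \<Longrightarrow> x = r *\<^sub>R g \<Longrightarrow> \<exists>k::int. x = of_int k *\<^sub>R g"
    proof -
      fix x r assume x: "x \<in> G" "x = r *\<^sub>R g"
      define y where "y = x - of_int \<lfloor>r\<rfloor> *\<^sub>R g"
      have yG: "y \<in> G" unfolding y_def using x gG G grp_diff grp_int_mult by blast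
      have yeq: "y = (r - of_int \<lfloor>r\<rfloor>) *\<^sub>R g" unfolding y_def x(2) by (simp add: algebra_simps)
      have f: "0 \<le> r - of_int \<lfloor>r\<rfloor>" "r - of_int \<lfloor>r\<rfloor> < 1" by linarith+
      have "y = 0"
      proof (rule ccontr)
        assume "y \<noteq> 0"
        then have "norm g \<le> norm y" using gmin yG by blast
        moreover have "norm y < norm g" using yeq f g0 by simp
        ultimately show False by simp
      qed
      then have "r = of_int \<lfloor>r\<rfloor>" using yeq g0 by simp
      then show "\<exists>k::int. x = of_int k *\<^sub>R g" using x(2) by metis
    qed
    define p where "p = (\<lambda>x. x - ((x \<bullet> g) / (g \<bullet> g)) *\<^sub>R g)"
    note pf = proj_facts[OF g0 p_def]
    define G' where "G' = p ` G"
    have grp': "grp G'" unfolding grp_def G'_def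
    proof (intro conjI ballI)
      show "0 \<in> p ` G" using pf(8) grp_0[OF G(1)] by (metis image_eqI)
      fix x y assume "x \<in> p ` G" "y \<in> p ` G"
      then obtain x1 y1 where "x1 \<in> G" "y1 \<in> G" "x = p x1" "y = p y1" by blast
      then show "x + y \<in> p ` G" using pf(1) grp_add[OF G(1)] by (metis image_eqI)
    next
      fix x assume "x \<in> p ` G"
      then obtain x1 where "x1 \<in> G" "x = p x1" by blast
      then show "- x \<in> p ` G" using pf(2) grp_uminus[OF G(1)] by (metis image_eqI)
    qed
    obtain e' where ud': "udisc G' e'"
    proof -
      define B where "B = G \<inter> cball 0 (1 + norm g)"
      have finB: "finite B" unfolding B_def using udisc_finite_bounded[OF G] by simp
      define N where "N = p ` B - {0}"
      have finN: "finite N" unfolding N_def using finB by simp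
      define e' where "e' = Min (insert 1 (norm ` N))"
      have e'pos: "e' > 0" unfolding e'_def using finN by (simp add: N_def)
      have e'1: "e' \<le> 1" unfolding e'_def using finN by simp
      have e'N: "\<And>y. y \<in> N \<Longrightarrow> e' \<le> norm y" unfolding e'_def using finN by simp
      have "\<forall>y\<in>G'. y \<noteq> 0 \<longrightarrow> e' \<le> norm y"
      proof (intro ballI impI)
        fix y assume y: "y \<in> G'" "y \<noteq> 0"
        then obtain x where x: "x \<in> G" "y = p x" unfolding G'_def by blast
        show "e' \<le> norm y"
        proof (cases "norm y \<ge> 1")
          case True then show ?thesis using e'1 by simp
        next
          case False
          define c where "c = (x \<bullet> g) / (g \<bullet> g)"
          define k where "k = \<lfloor>c + 1/2\<rfloor>"
          have kc: "\<bar>c - of_int k\<bar> \<le> 1" unfolding k_def by linarith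
          define x' where "x' = x - of_int k *\<^sub>R g"
          have x'G: "x' \<in> G" unfolding x'_def using x(1) gG G grp_diff grp_int_mult by blast
          have px': "p x' = y" unfolding x'_def x(2) using pf(6)[of x "- of_int k"] by simp
          have x'eq: "x' = p x + (c - of_int k) *\<^sub>R g" unfolding x'_def p_def c_def by (simp add: algebra_simps)
          have "norm x' \<le> norm (p x) + norm ((c - of_int k) *\<^sub>R g)" unfolding x'eq by (rule norm_triangle_ineq)
          also have "\<dots> \<le> 1 + norm g"
          proof -
            have "\<bar>c - of_int k\<bar> * norm g \<le> 1 * norm g" using kc by (rule mult_right_mono) simp
            then have "norm ((c - of_int k) *\<^sub>R g) \<le> 1 * norm g" by simp
            then show ?thesis using False x(2) by simp
          qed
          finally have "x' \<in> B" unfolding B_def using x'G by simp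
          then have "y \<in> N" unfolding N_def using px' y(2) by blast
          then show ?thesis by (rule e'N)
        qed
      qed
      then have "udisc G' e'" unfolding udisc_def using e'pos by blast
      then show ?thesis using that by blast
    qed
    have dim': "dim G' \<le> n"
    proof -
      have sub: "G' \<subseteq> span G"
      proof
        fix y assume "y \<in> G'"
        then obtain x where "x \<in> G" "y = p x" unfolding G'_def by blast
        moreover have "x \<in> span G" "g \<in> span G" using \<open>x \<in> G\<close> gG by (auto intro: span_base)
        ultimately show "y \<in> span G" unfolding p_def by (simp add: span_diff span_scale)
      qed
      have "span G' \<subseteq> span G" using span_mono[OF sub] by (simp only: span_span)
      moreover have "span G' \<subseteq> {y. g \<bullet> y = 0}"
      proof (rule span_minimal)
        show "G' \<subseteq> {y. g \<bullet> y = 0}" unfolding G'_def using pf(5) by (auto simp: inner_commute)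
        show "subspace {y. g \<bullet> y = 0}" by (rule subspace_hyperplane)
      qed
      moreover have "g \<in> span G" using gG by (rule span_base)
      moreover have "g \<bullet> g \<noteq> 0" using g0 by simp
      ultimately have "g \<notin> span G'" by blast
      then have "span G' \<subset> span G" using \<open>span G' \<subseteq> span G\<close> \<open>g \<in> span G\<close> by blast
      then have "dim G' < dim G" by (rule dim_psubset)
      then show ?thesis using Suc.prems(3) by simp
    qed
    define R where "R = (\<lambda>x y. \<exists>z\<in>G'. p x - p y = 2 *\<^sub>R z)"
    have odd: "\<And>x y. x \<in> S \<Longrightarrow> y \<in> S \<Longrightarrow> x \<noteq> y \<Longrightarrow> R x y \<Longrightarrow> \<exists>z\<in>G. x - y - g = 2 *\<^sub>R z"
    proof -
      fix x y assume xy: "x \<in> S" "y \<in> S" "x \<noteq> y" "R x y"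
      then obtain z where z: "z \<in> G'" "p x - p y = 2 *\<^sub>R z" unfolding R_def by blast
      then obtain z0 where z0: "z0 \<in> G" "z = p z0" unfolding G'_def by blast
      define v where "v = x - y - 2 *\<^sub>R z0"
      have xG: "x \<in> G" "y \<in> G" using xy Suc.prems(5) by auto
      have "z0 + z0 \<in> G" using z0(1) grp_add[OF G(1)] by blast
      then have "2 *\<^sub>R z0 \<in> G" by (simp add: scaleR_2)
      moreover have "x - y \<in> G" using xG grp_diff[OF G(1)] by blast
      ultimately have vG: "v \<in> G" unfolding v_def using grp_diff[OF G(1)] by blast
      have "p v = p x - p y - 2 *\<^sub>R p z0" unfolding v_def by (simp only: pf(3) pf(4))
      then have "p v = 0" using z(2) z0(2) by simp
      then have "v = ((v \<bullet> g) / (g \<bullet> g)) *\<^sub>R g" by (rule pf(7))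
      then obtain k::int where k: "v = of_int k *\<^sub>R g" using kern[OF vG] by blast
      show "\<exists>z\<in>G. x - y - g = 2 *\<^sub>R z"
      proof (cases "even k")
        case True
        then obtain j where j: "k = 2 * j" by (auto elim: evenE)
        have "x - y = 2 *\<^sub>R (z0 + of_int j *\<^sub>R g)" using k j unfolding v_def by (simp add: algebra_simps)
        moreover have "z0 + of_int j *\<^sub>R g \<in> G" using z0(1) gG grp_add[OF G(1)] grp_int_mult[OF G(1)] by blast
        ultimately show ?thesis using Suc.prems(6) xy by blast
      next
        case False
        then obtain j where j: "k = 2 * j + 1" by (metis oddE)
        have "x - y - g = 2 *\<^sub>R (z0 + of_int j *\<^sub>R g)" using k j unfolding v_def by (simp add: algebra_simps)
        moreover have "z0 + of_int j *\<^sub>R g \<in> G" using z0(1) gG grp_add[OF G(1)] grp_int_mult[OF G(1)] by blast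
        ultimately show ?thesis by blast
      qed
    qed
    have "\<exists>S'\<subseteq>S. (\<forall>x\<in>S'. \<forall>y\<in>S'. R x y \<longrightarrow> x = y) \<and> card S \<le> 2 * card S'"
    proof (rule red_classes[OF Suc.prems(4)])
      show "\<forall>x\<in>S. R x x" unfolding R_def using grp_0[OF grp'] by force
      show "\<forall>x\<in>S. \<forall>y\<in>S. R x y \<longrightarrow> R y x" unfolding R_def
      proof (intro ballI impI)
        fix x y assume "\<exists>z\<in>G'. p x - p y = 2 *\<^sub>R z"
        then obtain z where "z \<in> G'" "p x - p y = 2 *\<^sub>R z" by blast
        then have "- z \<in> G'" "p y - p x = 2 *\<^sub>R (- z)" using grp_uminus[OF grp'] by (auto simp: algebra_simps)
        then show "\<exists>z\<in>G'. p y - p x = 2 *\<^sub>R z" by blast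
      qed
      show "\<forall>x\<in>S. \<forall>y\<in>S. \<forall>z\<in>S. R x y \<longrightarrow> R y z \<longrightarrow> R x z" unfolding R_def
      proof (intro ballI impI)
        fix x y w assume "\<exists>z\<in>G'. p x - p y = 2 *\<^sub>R z" "\<exists>z\<in>G'. p y - p w = 2 *\<^sub>R z"
        then obtain z1 z2 where "z1 \<in> G'" "p x - p y = 2 *\<^sub>R z1" "z2 \<in> G'" "p y - p w = 2 *\<^sub>R z2" by blast
        then have "z1 + z2 \<in> G'" "p x - p w = 2 *\<^sub>R (z1 + z2)" using grp_add[OF grp'] by (auto simp: algebra_simps)
        then show "\<exists>z\<in>G'. p x - p w = 2 *\<^sub>R z" by blast
      qed
      show "\<forall>x\<in>S. \<forall>y\<in>S. \<forall>z\<in>S. R x y \<longrightarrow> R x z \<longrightarrow> y \<noteq> x \<longrightarrow> z \<noteq> x \<longrightarrow> y = z"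
      proof (intro ballI impI)
        fix x y w assume xyw: "x \<in> S" "y \<in> S" "w \<in> S" "R x y" "R x w" "y \<noteq> x" "w \<noteq> x"
        obtain z1 where z1: "z1 \<in> G" "x - y - g = 2 *\<^sub>R z1" using odd[OF xyw(1,2) not_sym[OF xyw(6)] xyw(4)] by blast
        obtain z2 where z2: "z2 \<in> G" "x - w - g = 2 *\<^sub>R z2" using odd[OF xyw(1,3) not_sym[OF xyw(7)] xyw(5)] by blast
        have "w - y = 2 *\<^sub>R (z1 - z2)" using z1(2) z2(2) by (simp add: algebra_simps)
        moreover have "z1 - z2 \<in> G" using z1 z2 grp_diff[OF G(1)] by blast
        ultimately have ex: "\<exists>z\<in>G. w - y = 2 *\<^sub>R z" by blast
        show "y = w"
        proof (rule ccontr)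
          assume "y \<noteq> w"
          then have "w \<noteq> y" by simp
          then have "\<not> (\<exists>z\<in>G. w - y = 2 *\<^sub>R z)" using Suc.prems(6) xyw(2,3) by blast
          then show False using ex by blast
        qed
      qed
    qed
    then obtain S' where S': "S' \<subseteq> S" "\<forall>x\<in>S'. \<forall>y\<in>S'. R x y \<longrightarrow> x = y" "card S \<le> 2 * card S'" by blast
    have inj: "inj_on p S'"
    proof (rule inj_onI)
      fix x y assume "x \<in> S'" "y \<in> S'" "p x = p y"
      moreover have "R x y" unfolding R_def using \<open>p x = p y\<close> grp_0[OF grp'] by force
      ultimately show "x = y" using S'(2) by blast
    qed
    have finS': "finite S'" using S'(1) Suc.prems(4) finite_subset by blast
    have "card (p ` S') \<le> 2 ^ n"
    proof (rule Suc.IH[OF grp' ud' dim'])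
      show "finite (p ` S')" using finS' by simp
      show "p ` S' \<subseteq> G'" unfolding G'_def using S'(1) Suc.prems(5) by blast
      show "\<forall>x\<in>p ` S'. \<forall>y\<in>p ` S'. x \<noteq> y \<longrightarrow> \<not> (\<exists>z\<in>G'. x - y = 2 *\<^sub>R z)"
      proof (intro ballI impI notI)
        fix x y assume "x \<in> p ` S'" "y \<in> p ` S'" "x \<noteq> y" "\<exists>z\<in>G'. x - y = 2 *\<^sub>R z"
        then obtain x1 y1 where "x1 \<in> S'" "y1 \<in> S'" "x = p x1" "y = p y1" by blast
        then have "R x1 y1" unfolding R_def using \<open>\<exists>z\<in>G'. x - y = 2 *\<^sub>R z\<close> by blast
        then have "x1 = y1" using S'(2) \<open>x1 \<in> S'\<close> \<open>y1 \<in> S'\<close> by blast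
        then show False using \<open>x \<noteq> y\<close> \<open>x = p x1\<close> \<open>y = p y1\<close> by simp
      qed
    qed
    then have "card S' \<le> 2 ^ n" using card_image[OF inj] by simp
    then show ?thesis using S'(3) by simp
  qed
qed

definition slab :: "'a::euclidean_space \<Rightarrow> real \<Rightarrow> real \<Rightarrow> 'a set" where
  "slab u lo hi = {y. u \<bullet> y \<le> hi} \<inter> {y. lo \<le> u \<bullet> y}"

definition sepok :: "'a::euclidean_space set \<Rightarrow> 'a set \<Rightarrow> 'a \<Rightarrow> real \<Rightarrow> 'a \<Rightarrow> bool" where
  "sepok L C u h w \<longleftrightarrow> u \<noteq> 0 \<and> (\<forall>y\<in>C. u \<bullet> y \<le> h) \<and> (\<forall>y\<in>C. h \<le> u \<bullet> (y + lattice_diam L C *\<^sub>R w))"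

lemma closed_slab: "closed (slab u lo hi)"
  unfolding slab_def using closed_halfspace_le[of u hi] closed_halfspace_ge[of lo u]
  by (simp add: closed_Int inner_commute)

lemma convex_slab: "convex (slab u lo hi)"
  unfolding slab_def using convex_halfspace_le[of u hi] convex_halfspace_ge[of lo u]
  by (simp add: convex_Int)

lemma polyhedron_slab: "polyhedron (slab u lo hi)"
  unfolding slab_def using polyhedron_halfspace_le[of u hi] polyhedron_halfspace_ge[of lo u]
  by (simp add: polyhedron_Int)

lemma body_not_flat:
  fixes C :: "'a::euclidean_space set"
  assumes "interior C \<noteq> {}" "u \<noteq> 0"
  shows "\<not> (\<forall>y\<in>C. u \<bullet> y = h)"
proof
  assume flat: "\<forall>y\<in>C. u \<bullet> y = h"
  obtain x where "x \<in> interior C" using assms by blast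
  then obtain r where r: "r > 0" "ball x r \<subseteq> C" by (auto simp: mem_interior)
  define y where "y = x + (r / (2 * norm u)) *\<^sub>R u"
  have "norm ((r / (2 * norm u)) *\<^sub>R u) < r" using r assms(2) by simp
  then have "y \<in> C" using r unfolding y_def by (auto simp: dist_norm)
  moreover have "x \<in> C" using r by auto
  moreover have "u \<bullet> y = u \<bullet> x + r * norm u / 2"
    unfolding y_def using assms(2) by (simp add: inner_add_right power2_norm_eq_inner[symmetric] power2_eq_square)
  ultimately show False using flat r assms(2) by simp
qed

lemma W_finite:
  fixes L C :: "'a::euclidean_space set"
  assumes L: "is_lattice L" and C: "convex_body C"
  shows "finite (diameter_directions L C)"
proof -
  let ?d = "lattice_diam L C"
  have d0: "?d > 0" using diam_pos[OF L C] .
  have cv: "convex C" and bC: "bounded C" using C unfolding convex_body_def by (auto simp: compact_imp_bounded)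
  obtain R where R: "\<forall>x\<in>C. norm x \<le> R" using bC bounded_iff by blast
  obtain e where e: "udisc L e" using lattice_udisc[OF L] by blast
  have "diameter_directions L C \<subseteq> L \<inter> cball 0 (2 * R / ?d)"
  proof
    fix w assume "w \<in> diameter_directions L C"
    then obtain a where a: "w \<in> L" "a \<in> C" "a + ?d *\<^sub>R w \<in> C" unfolding DD_char[OF cv] by blast
    have "norm a \<le> R" "norm (a + ?d *\<^sub>R w) \<le> R" using R a by auto
    then have "norm (?d *\<^sub>R w) \<le> 2 * R" using norm_triangle_ineq4[of "a + ?d *\<^sub>R w" a] by simp
    then have "?d * norm w \<le> 2 * R" using d0 by simp
    then have "norm w \<le> 2 * R / ?d" using d0 by (simp add: field_simps)
    then show "w \<in> L \<inter> cball 0 (2 * R / ?d)" using a by simp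
  qed
  then show ?thesis using udisc_finite_bounded[OF lattice_grp[OF L] e, of "cball 0 (2 * R / ?d)"]
    by (meson bounded_cball finite_subset)
qed

lemma slab_rep:
  fixes L C :: "'a::euclidean_space set"
  assumes L: "is_lattice L" and C: "convex_body C" and comp: "lattice_complete L C"
    and sep: "\<forall>w\<in>diameter_directions L C. sepok L C (u w) (h w) w"
  shows "C = (\<Inter>w\<in>diameter_directions L C. slab (u w) (h w - lattice_diam L C * (u w \<bullet> w)) (h w))"
proof -
  define d where "d = lattice_diam L C"
  define W where "W = diameter_directions L C"
  define P where "P = (\<Inter>w\<in>W. slab (u w) (h w - d * (u w \<bullet> w)) (h w))"
  have d0: "d > 0" unfolding d_def using diam_pos[OF L C] .
  have cv: "convex C" and bC: "bounded C" and cC: "compact C" and iC: "interior C \<noteq> {}"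
    using C unfolding convex_body_def by (auto simp: compact_imp_bounded)
  have Wc: "W = {w \<in> L. w \<noteq> 0 \<and> (\<exists>a. a \<in> C \<and> a + d *\<^sub>R w \<in> C)}"
    unfolding W_def d_def by (rule DD_char[OF cv])
  have finW: "finite W" unfolding W_def using W_finite[OF L C] .
  have sepW: "\<And>w. w \<in> W \<Longrightarrow> u w \<noteq> 0 \<and> (\<forall>y\<in>C. u w \<bullet> y \<le> h w) \<and> (\<forall>y\<in>C. h w \<le> u w \<bullet> (y + d *\<^sub>R w))"
    using sep unfolding W_def d_def sepok_def by blast
  have CP: "C \<subseteq> P"
  proof
    fix y assume y: "y \<in> C"
    show "y \<in> P" unfolding P_def
    proof
      fix w assume w: "w \<in> W"
      have "u w \<bullet> y \<le> h w" "h w \<le> u w \<bullet> (y + d *\<^sub>R w)" using sepW[OF w] y by auto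
      then show "y \<in> slab (u w) (h w - d * (u w \<bullet> w)) (h w)" unfolding slab_def
        by (simp add: inner_add_right)
    qed
  qed
  have upos: "\<And>w. w \<in> W \<Longrightarrow> u w \<bullet> w > 0"
  proof (rule ccontr)
    fix w assume w: "w \<in> W" and "\<not> u w \<bullet> w > 0"
    then have le: "u w \<bullet> w \<le> 0" by simp
    have "\<forall>y\<in>C. u w \<bullet> y = h w"
    proof
      fix y assume y: "y \<in> C"
      have "u w \<bullet> y \<le> h w" "h w \<le> u w \<bullet> y + d * (u w \<bullet> w)" using sepW[OF w] y by (auto simp: inner_add_right)
      moreover have "d * (u w \<bullet> w) \<le> 0" using le d0 by (simp add: mult_nonneg_nonpos)
      ultimately show "u w \<bullet> y = h w" by linarith
    qed
    then show False using body_not_flat[OF iC] sepW[OF w] by blast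
  qed
  define X where "X = {d *\<^sub>R w | w. w \<in> L \<and> w \<noteq> 0 \<and> w \<notin> W}"
  define DC where "DC = {x - y | x y. x \<in> C \<and> y \<in> C}"
  obtain e where e: "udisc L e" using lattice_udisc[OF L] by blast
  have e0: "e > 0" using e by (simp add: udisc_def)
  have clX: "closed X"
  proof (rule discrete_imp_closed[of "d * e"])
    show "0 < d * e" using d0 e0 by simp
    show "\<forall>x\<in>X. \<forall>y\<in>X. dist y x < d * e \<longrightarrow> y = x"
    proof (intro ballI impI)
      fix x y assume xy: "x \<in> X" "y \<in> X" "dist y x < d * e"
      then obtain w1 w2 where w: "x = d *\<^sub>R w1" "y = d *\<^sub>R w2" "w1 \<in> L" "w2 \<in> L" unfolding X_def by blast
      show "y = x"
      proof (rule ccontr)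
        assume "y \<noteq> x"
        then have "w2 \<noteq> w1" using w by auto
        then have "e \<le> dist w2 w1" using udisc_sep[OF lattice_grp[OF L] e w(4,3)] by simp
        moreover have "dist y x = d * dist w2 w1" using w d0
          by (simp add: dist_norm scaleR_diff_right[symmetric])
        ultimately have "d * e \<le> dist y x" using d0 by simp
        then show False using xy(3) by simp
      qed
    qed
  qed
  have cDC: "compact DC" unfolding DC_def using compact_differences[OF cC cC] .
  have disj: "DC \<inter> X = {}"
  proof (rule ccontr)
    assume "DC \<inter> X \<noteq> {}"
    then obtain x y w where "x \<in> C" "y \<in> C" "x - y = d *\<^sub>R w" "w \<in> L" "w \<noteq> 0" "w \<notin> W"
      unfolding DC_def X_def by blast
    then have "y + d *\<^sub>R w \<in> C" by (metis add.commute diff_add_cancel)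
    then have "w \<in> W" unfolding Wc using \<open>y \<in> C\<close> \<open>w \<in> L\<close> \<open>w \<noteq> 0\<close> by blast
    then show False using \<open>w \<notin> W\<close> by blast
  qed
  obtain dd where dd: "dd > 0" "\<forall>x\<in>DC. \<forall>y\<in>X. dd \<le> dist x y"
    using separate_compact_closed[OF cDC clX disj] by blast
  define eps where "eps = dd / 3"
  have eps0: "eps > 0" unfolding eps_def using dd by simp
  define N where "N = (\<Union>c\<in>C. \<Union>v\<in>cball 0 eps. {c + v})"
  define Q where "Q = P \<inter> N"
  have clP: "closed P" unfolding P_def by (intro closed_INT ballI closed_slab)
  have cvP: "convex P" unfolding P_def by (intro convex_INT ballI convex_slab)
  have cN: "compact N" unfolding N_def by (intro compact_sums' cC compact_cball)
  have cvN: "convex N" unfolding N_def by (intro convex_sums cv convex_cball)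
  have CN: "C \<subseteq> N"
  proof
    fix c assume c: "c \<in> C"
    have "0 \<in> cball (0::'a) eps" using eps0 by simp
    moreover have "c = c + 0" by simp
    ultimately show "c \<in> N" unfolding N_def using c by blast
  qed
  have CQ: "C \<subseteq> Q" unfolding Q_def using CP CN by blast
  have cQ: "compact Q" unfolding Q_def using clP cN by blast
  have cvQ: "convex Q" unfolding Q_def using cvP cvN by (rule convex_Int)
  have iQ: "interior Q \<noteq> {}" using interior_mono[OF CQ] iC by blast
  have bodyQ: "convex_body Q" unfolding convex_body_def using cQ cvQ iQ by blast
  have chordQ: "\<And>a t g. a \<in> Q \<Longrightarrow> a + t *\<^sub>R g \<in> Q \<Longrightarrow> g \<in> L \<Longrightarrow> g \<noteq> 0 \<Longrightarrow> t > 0 \<Longrightarrow> t \<le> d"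
  proof -
    fix a t g assume a: "a \<in> Q" "a + t *\<^sub>R g \<in> Q" and g: "g \<in> L" "g \<noteq> 0" and t: "t > 0"
    show "t \<le> d"
    proof (cases "g \<in> W")
      case True
      have "a \<in> slab (u g) (h g - d * (u g \<bullet> g)) (h g)" "a + t *\<^sub>R g \<in> slab (u g) (h g - d * (u g \<bullet> g)) (h g)"
        using a True unfolding Q_def P_def by auto
      then have "u g \<bullet> a + t * (u g \<bullet> g) \<le> h g" "h g - d * (u g \<bullet> g) \<le> u g \<bullet> a"
        unfolding slab_def by (auto simp: inner_add_right)
      then have "t * (u g \<bullet> g) \<le> d * (u g \<bullet> g)" by linarith
      then show ?thesis using upos[OF True] by simp
    next
      case False
      show ?thesis
      proof (rule ccontr)
        assume "\<not> t \<le> d"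
        then have td: "d < t" by simp
        have "a + d *\<^sub>R g \<in> Q"
        proof -
          have "a + d *\<^sub>R g = (1 - d/t) *\<^sub>R a + (d/t) *\<^sub>R (a + t *\<^sub>R g)" using t by (simp add: algebra_simps)
          moreover have "0 \<le> d/t" "d/t \<le> 1" using d0 t td by auto
          ultimately show ?thesis using cvQ a unfolding convex_alt by (metis add.commute)
        qed
        then obtain c1 v1 c2 v2 where cv1: "c1 \<in> C" "v1 \<in> cball 0 eps" "a = c1 + v1"
          and cv2: "c2 \<in> C" "v2 \<in> cball 0 eps" "a + d *\<^sub>R g = c2 + v2"
          using a(1) unfolding Q_def N_def by blast
        have "c2 - c1 \<in> DC" unfolding DC_def using cv1 cv2 by blast
        moreover have "d *\<^sub>R g \<in> X" unfolding X_def using g False by blast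
        ultimately have "dd \<le> dist (c2 - c1) (d *\<^sub>R g)" using dd by blast
        moreover have "d *\<^sub>R g = (c2 - c1) + (v2 - v1)" using cv1(3) cv2(3) by (simp add: algebra_simps)
        then have "dist (c2 - c1) (d *\<^sub>R g) = norm (v2 - v1)" by (simp add: dist_norm norm_minus_commute)
        moreover have "norm (v2 - v1) \<le> 2 * eps" using cv1(2) cv2(2) norm_triangle_ineq4[of v2 v1] by simp
        ultimately show False using dd eps_def by simp
      qed
    qed
  qed
  have Cne: "C \<noteq> {}" using iC interior_subset by blast
  then have Qne: "Q \<noteq> {}" using CQ by blast
  have "lattice_diam L Q \<le> d" using diam_le[of L Q d] L Qne d0 chordQ by simp
  moreover have "d \<le> lattice_diam L Q" unfolding d_def
    using diam_mono[OF L CQ Cne] cQ by (simp add: compact_imp_bounded)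
  ultimately have "lattice_diam L Q = lattice_diam L C" unfolding d_def by simp
  then have QC: "Q = C" using comp bodyQ CQ unfolding lattice_complete_def by blast
  \<comment> \<open>clopen argument\<close>
  define Op where "Op = (\<Union>c\<in>C. \<Union>v\<in>ball 0 eps. {c + v})"
  have oOp: "open Op" unfolding Op_def by (intro open_sums) simp
  have CO: "C \<subseteq> Op"
  proof
    fix c assume c: "c \<in> C"
    have "0 \<in> ball (0::'a) eps" using eps0 by simp
    moreover have "c = c + 0" by simp
    ultimately show "c \<in> Op" unfolding Op_def using c by blast
  qed
  have ON: "Op \<subseteq> N" unfolding Op_def N_def by auto
  have CPO: "C = P \<inter> Op" using CP CO ON QC unfolding Q_def by blast
  have "connected P" using cvP by (rule convex_connected)
  moreover have "openin (top_of_set P) C" using CPO oOp by (simp add: openin_open_Int)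
  moreover have "closedin (top_of_set P) C"
  proof -
    have "C = P \<inter> C" using CP by blast
    then show ?thesis using closedin_closed_Int[of C P] compact_imp_closed[OF cC] by simp
  qed
  moreover have "C \<noteq> {}" using iC interior_subset by blast
  ultimately have "C = P" unfolding connected_clopen by blast
  then show ?thesis unfolding P_def W_def d_def .
qed

lemma facet_max:
  fixes C :: "'a::euclidean_space set"
  assumes cv: "convex C" and F: "F facet_of C" and G: "G face_of C" "F \<subseteq> G" "G \<noteq> C"
  shows "G = F"
proof (rule ccontr)
  assume ne: "G \<noteq> F"
  have FC: "F face_of C" and Fd: "aff_dim F = aff_dim C - 1" using F unfolding facet_of_def by auto
  have "aff_dim G < aff_dim C" using face_of_aff_dim_lt[OF cv G(1) G(3)] .
  moreover have "F face_of G" using face_of_subset[OF FC G(2) face_of_imp_subset[OF G(1)]] .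
  then have "aff_dim F < aff_dim G" using face_of_aff_dim_lt[OF face_of_imp_convex[OF G(1)]] ne by metis
  ultimately show False using Fd by simp
qed

lemma facet_hyper:
  fixes C :: "'a::euclidean_space set"
  assumes iC: "interior C \<noteq> {}" and F: "F facet_of C" and u: "u \<noteq> 0" and sub: "F \<subseteq> {y. u \<bullet> y = c}"
  shows "affine hull F = {y. u \<bullet> y = c}"
proof (rule affine_dim_equal)
  show "affine (affine hull F)" by simp
  show "affine {y. u \<bullet> y = c}" by (rule affine_hyperplane)
  show "affine hull F \<noteq> {}" using F unfolding facet_of_def by simp
  show "affine hull F \<subseteq> {y. u \<bullet> y = c}" using sub by (intro hull_minimal affine_hyperplane)
  have "aff_dim F = aff_dim C - 1" using F unfolding facet_of_def by simp
  also have "\<dots> = int DIM('a) - 1" using aff_dim_nonempty_interior[OF iC] by simp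
  finally show "aff_dim (affine hull F) = aff_dim {y. u \<bullet> y = c}" using u by simp
qed

lemma sep_exists:
  fixes L C :: "'a::euclidean_space set"
  assumes L: "is_lattice L" and C: "convex_body C" and w: "w \<in> diameter_directions L C"
  shows "\<exists>u h. sepok L C u h w"
proof -
  define d where "d = lattice_diam L C"
  have d0: "d > 0" unfolding d_def using diam_pos[OF L C] .
  have cv: "convex C" and bC: "bounded C" and cC: "compact C" and iC: "interior C \<noteq> {}"
    using C unfolding convex_body_def by (auto simp: compact_imp_bounded)
  have wL: "w \<in> L" "w \<noteq> 0" using w unfolding DD_char[OF cv] by auto
  define T where "T = (\<lambda>y. y + d *\<^sub>R w) ` interior C"
  have cvT: "convex T" unfolding T_def using convex_translation_subtract[OF convex_interior[OF cv], of "- (d *\<^sub>R w)"] by simp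
  have disj: "interior C \<inter> T = {}"
  proof (rule ccontr)
    assume "interior C \<inter> T \<noteq> {}"
    then obtain y where y: "y \<in> interior C" "y + d *\<^sub>R w \<in> interior C" unfolding T_def by blast
    then obtain r where r: "r > 0" "ball (y + d *\<^sub>R w) r \<subseteq> C" by (auto simp: mem_interior)
    define s where "s = r / (2 * norm w)"
    have s0: "s > 0" using r wL unfolding s_def by simp
    have "norm (s *\<^sub>R w) < r" using r wL unfolding s_def by simp
    then have "y + (d + s) *\<^sub>R w \<in> C" using r by (auto simp: dist_norm algebra_simps)
    moreover have "y \<in> C" using y(1) interior_subset by blast
    ultimately have "d + s \<le> d" unfolding d_def using chord_le_diam[OF L bC _ _ wL] s0 d0
      by (metis add_pos_pos d_def)
    then show False using s0 by simp
  qed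
  obtain a b where ab: "a \<noteq> 0" "\<forall>x\<in>interior C. a \<bullet> x \<le> b" "\<forall>x\<in>T. a \<bullet> x \<ge> b"
    using separating_hyperplane_sets[OF convex_interior[OF cv] cvT iC _ disj] iC unfolding T_def by blast
  have clC: "closure (interior C) = C" using convex_closure_interior[OF cv iC] compact_imp_closed[OF cC] by simp
  have "C \<subseteq> {x. a \<bullet> x \<le> b}"
  proof -
    have "closure (interior C) \<subseteq> {x. a \<bullet> x \<le> b}" using ab(2) by (intro closure_minimal closed_halfspace_le) auto
    then show ?thesis using clC by simp
  qed
  moreover have "C \<subseteq> {x. b - d * (a \<bullet> w) \<le> a \<bullet> x}"
  proof -
    have "interior C \<subseteq> {x. b - d * (a \<bullet> w) \<le> a \<bullet> x}"
    proof
      fix x assume "x \<in> interior C"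
      then have "a \<bullet> (x + d *\<^sub>R w) \<ge> b" using ab(3) unfolding T_def by blast
      then show "x \<in> {x. b - d * (a \<bullet> w) \<le> a \<bullet> x}" by (simp add: inner_add_right)
    qed
    then have "closure (interior C) \<subseteq> {x. b - d * (a \<bullet> w) \<le> a \<bullet> x}"
      using closed_halfspace_ge[of "b - d * (a \<bullet> w)" a] by (intro closure_minimal) (auto simp: inner_commute)
    then show ?thesis using clC by simp
  qed
  ultimately have "sepok L C a b w" unfolding sepok_def d_def[symmetric] using ab(1)
    by (auto simp: inner_add_right)
  then show ?thesis by blast
qed

lemma C_polytope:
  fixes L C :: "'a::euclidean_space set"
  assumes L: "is_lattice L" and C: "convex_body C" and comp: "lattice_complete L C"
  shows "polytope C"
proof -
  have "\<forall>w\<in>diameter_directions L C. \<exists>p. sepok L C (fst p) (snd p) w"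
    using sep_exists[OF L C] by auto
  then obtain f where f: "\<forall>w\<in>diameter_directions L C. sepok L C (fst (f w)) (snd (f w)) w"
    by metis
  have eq: "C = (\<Inter>w\<in>diameter_directions L C. slab ((fst \<circ> f) w) ((snd \<circ> f) w - lattice_diam L C * ((fst \<circ> f) w \<bullet> w)) ((snd \<circ> f) w))"
    using slab_rep[OF L C comp, of "fst \<circ> f" "snd \<circ> f"] f by simp
  have "polyhedron C"
    by (subst eq, rule polyhedron_Inter) (auto simp: W_finite[OF L C] polyhedron_slab)
  moreover have "bounded C" using C unfolding convex_body_def by (simp add: compact_imp_bounded)
  ultimately show ?thesis by (simp add: polytope_eq_bounded_polyhedron)
qed

lemma tilt:
  fixes C A F :: "'a::euclidean_space set"
  assumes C: "C = convex hull V" "finite V" "interior C \<noteq> {}"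
    and A: "A = convex hull V'" "finite V'"
    and u0: "u0 \<noteq> 0" "\<forall>y\<in>C. u0 \<bullet> y \<le> h0" "\<forall>y\<in>A. h0 \<le> u0 \<bullet> y"
    and F: "F facet_of C" "F \<subseteq> {y. u0 \<bullet> y = h0}"
    and disj: "rel_interior F \<inter> A = {}"
    and Zne: "A \<inter> {y. u0 \<bullet> y = h0} \<noteq> {}"
  shows "\<exists>u h. u \<noteq> 0 \<and> (\<forall>y\<in>C. u \<bullet> y \<le> h) \<and> (\<forall>y\<in>A. h \<le> u \<bullet> y) \<and> (\<forall>c. \<not> F \<subseteq> {y. u \<bullet> y = c})"
proof -
  have cvC: "convex C" using C(1) by simp
  have cvA: "convex A" using A(1) by simp
  have FC: "C \<inter> {y. u0 \<bullet> y = h0} = F"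
  proof -
    have G: "C \<inter> {y. u0 \<bullet> y = h0} face_of C" using face_of_Int_supporting_hyperplane_le[OF cvC] u0(2) by blast
    have "F \<subseteq> C" using F(1) unfolding facet_of_def using face_of_imp_subset by blast
    then have sub: "F \<subseteq> C \<inter> {y. u0 \<bullet> y = h0}" using F(2) by blast
    have "C \<inter> {y. u0 \<bullet> y = h0} \<noteq> C"
    proof
      assume "C \<inter> {y. u0 \<bullet> y = h0} = C"
      then have "\<forall>y\<in>C. u0 \<bullet> y = h0" by blast
      then show False using body_not_flat[OF C(3) u0(1)] by blast
    qed
    then show ?thesis using facet_max[OF cvC F(1) G sub] by simp
  qed
  have Fface: "F face_of C" and Fne: "F \<noteq> {}" using F(1) unfolding facet_of_def by auto
  have cvF: "convex F" using face_of_imp_convex[OF Fface] .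
  have clC: "closed C" using C(1,2) by (simp add: compact_imp_closed finite_imp_compact_convex_hull)
  have clF: "closed F" using face_of_imp_closed[OF cvC clC Fface] .
  define R where "R = rel_interior F"
  have cvR: "convex R" unfolding R_def using convex_rel_interior[OF cvF] .
  have Rne: "R \<noteq> {}" unfolding R_def using rel_interior_eq_empty cvF Fne by blast
  have RF: "R \<subseteq> F" unfolding R_def by (rule rel_interior_subset)
  define Z where "Z = A \<inter> {y. u0 \<bullet> y = h0}"
  have cvZ: "convex Z" unfolding Z_def using cvA convex_hyperplane by (rule convex_Int)
  define S1 where "S1 = (\<Union>y\<in>R. \<Union>v\<in>span {u0}. {y + v})"
  define S2 where "S2 = (\<Union>y\<in>Z. \<Union>v\<in>span {u0}. {y + v})"
  have cvspan: "convex (span {u0})" by (rule subspace_imp_convex) simp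
  have cvS1: "convex S1" unfolding S1_def using cvR cvspan by (rule convex_sums)
  have cvS2: "convex S2" unfolding S2_def using cvZ cvspan by (rule convex_sums)
  have S1ne: "S1 \<noteq> {}" unfolding S1_def using Rne span_zero by blast
  have S2ne: "S2 \<noteq> {}" unfolding S2_def using Zne span_zero unfolding Z_def by blast
  have uu: "u0 \<bullet> u0 > 0" using u0(1) by simp
  have S12: "S1 \<inter> S2 = {}"
  proof (rule ccontr)
    assume "S1 \<inter> S2 \<noteq> {}"
    then obtain y v z v' where yv: "y \<in> R" "v \<in> span {u0}" "z \<in> Z" "v' \<in> span {u0}" "y + v = z + v'"
      unfolding S1_def S2_def by blast
    obtain s where s: "v = s *\<^sub>R u0" using yv(2) by (auto simp: span_singleton)
    obtain s' where s': "v' = s' *\<^sub>R u0" using yv(4) by (auto simp: span_singleton)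
    have "u0 \<bullet> y = h0" using yv(1) RF F(2) by blast
    moreover have "u0 \<bullet> z = h0" using yv(3) unfolding Z_def by blast
    moreover have "u0 \<bullet> (y + v) = u0 \<bullet> (z + v')" using yv(5) by simp
    ultimately have "s * (u0 \<bullet> u0) = s' * (u0 \<bullet> u0)" using s s' by (simp add: inner_add_right)
    then have "s = s'" using uu by simp
    then have "y = z" using yv(5) s s' by simp
    then have "y \<in> rel_interior F \<inter> A" using yv(1,3) unfolding R_def Z_def by blast
    then show False using disj by blast
  qed
  obtain a b where ab: "a \<noteq> 0" "\<forall>x\<in>S1. a \<bullet> x \<le> b" "\<forall>x\<in>S2. a \<bullet> x \<ge> b"
    using separating_hyperplane_sets[OF cvS1 cvS2 S1ne S2ne S12] by blast
  obtain y0 where y0: "y0 \<in> R" using Rne by blast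
  have au: "a \<bullet> u0 = 0"
  proof (rule ccontr)
    assume ne: "a \<bullet> u0 \<noteq> 0"
    define s where "s = (b - a \<bullet> y0 + 1) / (a \<bullet> u0)"
    have "y0 + s *\<^sub>R u0 \<in> S1" unfolding S1_def using y0 by (auto simp: span_singleton)
    then have "a \<bullet> (y0 + s *\<^sub>R u0) \<le> b" using ab(2) by blast
    moreover have "a \<bullet> (y0 + s *\<^sub>R u0) = b + 1" unfolding s_def using ne by (simp add: inner_add_right)
    ultimately show False by simp
  qed
  have aR: "\<forall>y\<in>R. a \<bullet> y \<le> b"
  proof
    fix y assume "y \<in> R"
    then have "y + 0 \<in> S1" unfolding S1_def using span_zero by blast
    then show "a \<bullet> y \<le> b" using ab(2) by simp
  qed
  have aF: "\<forall>y\<in>F. a \<bullet> y \<le> b"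
  proof -
    have "closure R \<subseteq> {y. a \<bullet> y \<le> b}" using aR by (intro closure_minimal closed_halfspace_le) auto
    moreover have "closure R = F" unfolding R_def using convex_closure_rel_interior[OF cvF] clF by simp
    ultimately show ?thesis by blast
  qed
  have aZ: "\<forall>z\<in>Z. b \<le> a \<bullet> z"
  proof
    fix z assume "z \<in> Z"
    then have "z + 0 \<in> S2" unfolding S2_def using span_zero by blast
    then show "b \<le> a \<bullet> z" using ab(3) by simp
  qed
  define q where "q = (\<lambda>v. if u0 \<bullet> v < h0 then (h0 - u0 \<bullet> v) / (\<bar>a \<bullet> v - b\<bar> + 1) else 1)"
  define q' where "q' = (\<lambda>v. if u0 \<bullet> v > h0 then (u0 \<bullet> v - h0) / (\<bar>a \<bullet> v - b\<bar> + 1) else 1)"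
  define eta where "eta = Min (insert 1 (q ` V \<union> q' ` V'))"
  have finE: "finite (insert 1 (q ` V \<union> q' ` V'))" using C(2) A(2) by simp
  have qpos: "\<And>v. q v > 0" unfolding q_def by (simp add: add_pos_nonneg)
  have q'pos: "\<And>v. q' v > 0" unfolding q'_def by (simp add: add_pos_nonneg)
  have allpos: "\<forall>x\<in>insert 1 (q ` V \<union> q' ` V'). (0::real) < x" using qpos q'pos by auto
  have eta0: "eta > 0" unfolding eta_def using Min_gr_iff[OF finE] allpos by blast
  have etaq: "\<And>v. v \<in> V \<Longrightarrow> eta \<le> q v" unfolding eta_def
  proof -
    fix v assume "v \<in> V"
    then have "q v \<in> insert 1 (q ` V \<union> q' ` V')" by blast
    then show "Min (insert 1 (q ` V \<union> q' ` V')) \<le> q v" using Min_le[OF finE] by blast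
  qed
  have etaq': "\<And>v. v \<in> V' \<Longrightarrow> eta \<le> q' v" unfolding eta_def
  proof -
    fix v assume "v \<in> V'"
    then have "q' v \<in> insert 1 (q ` V \<union> q' ` V')" by blast
    then show "Min (insert 1 (q ` V \<union> q' ` V')) \<le> q' v" using Min_le[OF finE] by blast
  qed
  define u where "u = u0 + eta *\<^sub>R a"
  define h where "h = h0 + eta * b"
  have key: "\<And>g x. g > 0 \<Longrightarrow> eta \<le> g / (\<bar>x\<bar> + 1) \<Longrightarrow> eta * x \<le> g"
  proof -
    fix g x :: real assume g: "g > 0" "eta \<le> g / (\<bar>x\<bar> + 1)"
    have cpos: "0 < \<bar>x\<bar> + 1" by simp
    have "eta * (\<bar>x\<bar> + 1) \<le> g" using g(2) pos_le_divide_eq[OF cpos] by blast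
    moreover have "eta * x \<le> eta * (\<bar>x\<bar> + 1)" using eta0 by (intro mult_left_mono) auto
    ultimately show "eta * x \<le> g" by linarith
  qed
  have "\<forall>v\<in>V. u \<bullet> v \<le> h"
  proof
    fix v assume v: "v \<in> V"
    have "v \<in> convex hull V" using v by (rule hull_inc)
    then have vC: "v \<in> C" using C(1) by simp
    have uv: "u \<bullet> v = u0 \<bullet> v + eta * (a \<bullet> v)" unfolding u_def by (simp add: inner_add_left)
    show "u \<bullet> v \<le> h"
    proof (cases "u0 \<bullet> v = h0")
      case True
      then have "v \<in> C \<inter> {y. u0 \<bullet> y = h0}" using vC by simp
      then have "v \<in> F" using FC by simp
      then have "a \<bullet> v \<le> b" using aF by blast
      then have "eta * (a \<bullet> v) \<le> eta * b" using eta0 by (intro mult_left_mono) auto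
      then show ?thesis using uv True unfolding h_def by linarith
    next
      case False
      have "u0 \<bullet> v \<le> h0" using u0(2) vC by blast
      then have lt: "u0 \<bullet> v < h0" using False by linarith
      have "eta \<le> (h0 - u0 \<bullet> v) / (\<bar>a \<bullet> v - b\<bar> + 1)" using etaq[OF v] lt unfolding q_def by simp
      then have "eta * (a \<bullet> v - b) \<le> h0 - u0 \<bullet> v" using key[of "h0 - u0 \<bullet> v" "a \<bullet> v - b"] lt by linarith
      then show ?thesis using uv unfolding h_def by (simp add: algebra_simps)
    qed
  qed
  then have Cu: "\<forall>y\<in>C. u \<bullet> y \<le> h"
  proof -
    assume "\<forall>v\<in>V. u \<bullet> v \<le> h"
    then have "convex hull V \<subseteq> {y. u \<bullet> y \<le> h}" by (intro hull_minimal convex_halfspace_le) auto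
    then show ?thesis using C(1) by blast
  qed
  have "\<forall>v\<in>V'. h \<le> u \<bullet> v"
  proof
    fix v assume v: "v \<in> V'"
    have "v \<in> convex hull V'" using v by (rule hull_inc)
    then have vA: "v \<in> A" using A(1) by simp
    have uv: "u \<bullet> v = u0 \<bullet> v + eta * (a \<bullet> v)" unfolding u_def by (simp add: inner_add_left)
    show "h \<le> u \<bullet> v"
    proof (cases "u0 \<bullet> v = h0")
      case True
      then have "v \<in> Z" using vA unfolding Z_def by simp
      then have "b \<le> a \<bullet> v" using aZ by blast
      then have "eta * b \<le> eta * (a \<bullet> v)" using eta0 by (intro mult_left_mono) auto
      then show ?thesis using uv True unfolding h_def by linarith
    next
      case False
      have "h0 \<le> u0 \<bullet> v" using u0(3) vA by blast
      then have lt: "u0 \<bullet> v > h0" using False by linarith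
      have "eta \<le> (u0 \<bullet> v - h0) / (\<bar>b - a \<bullet> v\<bar> + 1)" using etaq'[OF v] lt unfolding q'_def by (simp add: abs_minus_commute)
      then have "eta * (b - a \<bullet> v) \<le> u0 \<bullet> v - h0" using key[of "u0 \<bullet> v - h0" "b - a \<bullet> v"] lt by linarith
      then show ?thesis using uv unfolding h_def by (simp add: algebra_simps)
    qed
  qed
  then have Au: "\<forall>y\<in>A. h \<le> u \<bullet> y"
  proof -
    assume "\<forall>v\<in>V'. h \<le> u \<bullet> v"
    then have "convex hull V' \<subseteq> {y. h \<le> u \<bullet> y}"
      using convex_halfspace_ge[of h u] by (intro hull_minimal) (auto simp: inner_commute)
    then show ?thesis using A(1) by blast
  qed
  have "u \<bullet> u0 = u0 \<bullet> u0 + eta * (a \<bullet> u0)" unfolding u_def by (simp add: inner_add_left)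
  then have uu0: "u \<bullet> u0 = u0 \<bullet> u0" using au by simp
  then have un0: "u \<noteq> 0" using uu by auto
  have nc: "\<forall>c. \<not> F \<subseteq> {y. u \<bullet> y = c}"
  proof (intro allI notI)
    fix c assume Fc: "F \<subseteq> {y. u \<bullet> y = c}"
    have aff: "affine hull F = {y. u0 \<bullet> y = h0}" using facet_hyper[OF C(3) F(1) u0(1) F(2)] .
    have y0F: "y0 \<in> F" using y0 RF by blast
    have "u0 \<bullet> (y0 + a) = h0" using y0F F(2) au by (auto simp: inner_add_right inner_commute)
    then have "y0 + a \<in> affine hull F" using aff by simp
    moreover have "affine hull F \<subseteq> {y. u \<bullet> y = c}" using Fc by (intro hull_minimal affine_hyperplane)
    ultimately have "u \<bullet> (y0 + a) = c" by blast
    moreover have "u \<bullet> y0 = c" using y0F Fc by blast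
    ultimately have "u \<bullet> a = 0" by (simp add: inner_add_right)
    moreover have "u \<bullet> a = u0 \<bullet> a + eta * (a \<bullet> a)" unfolding u_def by (simp add: inner_add_left)
    ultimately have "eta * (a \<bullet> a) = 0" using au by (simp add: inner_commute)
    then show False using eta0 ab(1) by simp
  qed
  show ?thesis using un0 Cu Au nc by blast
qed

lemma tight:
  fixes C :: "'a::euclidean_space set"
  assumes finW: "finite W" and eq: "C = (\<Inter>w\<in>W. slab (u w) (lo w) (hi w))"
    and x: "x \<in> C" "x \<notin> interior C"
  shows "\<exists>w\<in>W. u w \<bullet> x = hi w \<or> u w \<bullet> x = lo w"
proof (rule ccontr)
  assume "\<not> (\<exists>w\<in>W. u w \<bullet> x = hi w \<or> u w \<bullet> x = lo w)"
  then have ne: "\<forall>w\<in>W. u w \<bullet> x \<noteq> hi w \<and> u w \<bullet> x \<noteq> lo w" by blast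
  define U where "U = (\<Inter>w\<in>W. {y. u w \<bullet> y < hi w} \<inter> {y. lo w < u w \<bullet> y})"
  have oU: "open U" unfolding U_def using finW
    by (intro open_INT ballI open_Int open_halfspace_lt open_halfspace_gt)
  have "x \<in> U"
  proof -
    have "\<forall>w\<in>W. x \<in> slab (u w) (lo w) (hi w)" using x(1) eq by blast
    then show ?thesis unfolding U_def slab_def using ne by force
  qed
  moreover have "U \<subseteq> C"
  proof
    fix y assume "y \<in> U"
    then have yU: "\<forall>w\<in>W. u w \<bullet> y < hi w \<and> lo w < u w \<bullet> y" unfolding U_def by blast
    show "y \<in> C" unfolding eq
    proof (rule INT_I)
      fix w assume "w \<in> W"
      then have "u w \<bullet> y < hi w" "lo w < u w \<bullet> y" using yU by auto
      then show "y \<in> slab (u w) (lo w) (hi w)" unfolding slab_def by simp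
    qed
  qed
  ultimately have "x \<in> interior C" using oU interiorI by blast
  then show False using x(2) by blast
qed

lemma face_tight:
  fixes C :: "'a::euclidean_space set"
  assumes cv: "convex C" and iC: "interior C \<noteq> {}" and u: "u \<noteq> 0" and sup: "\<forall>y\<in>C. u \<bullet> y \<le> c"
    and F: "F facet_of C" and x: "x \<in> rel_interior F" "u \<bullet> x = c"
  shows "C \<inter> {y. u \<bullet> y = c} = F"
proof -
  have G: "C \<inter> {y. u \<bullet> y = c} face_of C" using face_of_Int_supporting_hyperplane_le[OF cv] sup by blast
  have FC: "F \<subseteq> C" using F unfolding facet_of_def using face_of_imp_subset by blast
  have "x \<in> C" using x(1) rel_interior_subset FC by blast
  then have "(C \<inter> {y. u \<bullet> y = c}) \<inter> rel_interior F \<noteq> {}" using x by blast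
  then have sub: "F \<subseteq> C \<inter> {y. u \<bullet> y = c}" using subset_of_face_of[OF G FC] by blast
  have "C \<inter> {y. u \<bullet> y = c} \<noteq> C"
  proof
    assume "C \<inter> {y. u \<bullet> y = c} = C"
    then have "\<forall>y\<in>C. u \<bullet> y = c" by blast
    then show False using body_not_flat[OF iC u] by blast
  qed
  then show ?thesis using facet_max[OF cv F G sub] by simp
qed

lemma good_sep:
  fixes L C :: "'a::euclidean_space set"
  assumes L: "is_lattice L" and C: "convex_body C" and comp: "lattice_complete L C"
    and F: "F facet_of C"
    and noc: "\<forall>x\<in>rel_interior F. \<forall>w\<in>L. w \<noteq> 0 \<longrightarrow> x - lattice_diam L C *\<^sub>R w \<notin> C"
    and w: "w \<in> diameter_directions L C"
  shows "\<exists>u h. sepok L C u h w \<and> \<not> F \<subseteq> {y. u \<bullet> y = h}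
           \<and> \<not> F \<subseteq> {y. u \<bullet> y = h - lattice_diam L C * (u \<bullet> w)}"
proof -
  define d where "d = lattice_diam L C"
  have cv: "convex C" and iC: "interior C \<noteq> {}" using C unfolding convex_body_def by auto
  have pC: "polytope C" using C_polytope[OF L C comp] .
  then obtain V where V: "finite V" "C = convex hull V" unfolding polytope_def by blast
  have "w \<in> {w \<in> L. w \<noteq> 0 \<and> (\<exists>a. a \<in> C \<and> a + lattice_diam L C *\<^sub>R w \<in> C)}"
    using w DD_char[OF cv] by blast
  then obtain a where a: "a \<in> C" "a + d *\<^sub>R w \<in> C" and wL: "w \<in> L" "w \<noteq> 0"
    unfolding d_def by blast
  obtain u0 h0 where s0: "sepok L C u0 h0 w" using sep_exists[OF L C w] by blast
  then have u0: "u0 \<noteq> 0" "\<forall>y\<in>C. u0 \<bullet> y \<le> h0" "\<forall>y\<in>C. h0 \<le> u0 \<bullet> (y + d *\<^sub>R w)"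
    unfolding sepok_def d_def by auto
  show ?thesis
  proof (cases "F \<subseteq> {y. u0 \<bullet> y = h0}")
    case True
    define A where "A = (\<lambda>x. d *\<^sub>R w + x) ` C"
    have A1: "A = convex hull ((\<lambda>x. d *\<^sub>R w + x) ` V)" unfolding A_def V(2) by (rule convex_hull_translation[symmetric])
    have A2: "finite ((\<lambda>x. d *\<^sub>R w + x) ` V)" using V(1) by simp
    have Au: "\<forall>y\<in>A. h0 \<le> u0 \<bullet> y"
    proof
      fix y assume "y \<in> A"
      then obtain c where c: "c \<in> C" "y = d *\<^sub>R w + c" unfolding A_def by blast
      have "h0 \<le> u0 \<bullet> (c + d *\<^sub>R w)" using u0(3) c(1) by blast
      then show "h0 \<le> u0 \<bullet> y" using c(2) by (metis add.commute)
    qed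
    have disj: "rel_interior F \<inter> A = {}"
    proof (rule ccontr)
      assume "rel_interior F \<inter> A \<noteq> {}"
      then obtain x c where "x \<in> rel_interior F" "c \<in> C" "x = d *\<^sub>R w + c" unfolding A_def by blast
      then have "x - d *\<^sub>R w = c" by simp
      then have "x - lattice_diam L C *\<^sub>R w \<in> C" using \<open>c \<in> C\<close> unfolding d_def by simp
      then show False using noc \<open>x \<in> rel_interior F\<close> wL by blast
    qed
    have Zne: "A \<inter> {y. u0 \<bullet> y = h0} \<noteq> {}"
    proof -
      have "d *\<^sub>R w + a \<in> A" unfolding A_def using a(1) by blast
      moreover have "u0 \<bullet> (d *\<^sub>R w + a) = h0"
      proof -
        have "u0 \<bullet> (a + d *\<^sub>R w) \<le> h0" using u0(2) a(2) by blast
        moreover have "h0 \<le> u0 \<bullet> (a + d *\<^sub>R w)" using u0(3) a(1) by blast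
        ultimately show ?thesis by (simp add: add.commute)
      qed
      ultimately show ?thesis by blast
    qed
    have T: "\<exists>u h. u \<noteq> 0 \<and> (\<forall>y\<in>C. u \<bullet> y \<le> h) \<and> (\<forall>y\<in>A. h \<le> u \<bullet> y) \<and> (\<forall>c. \<not> F \<subseteq> {y. u \<bullet> y = c})"
      by (rule tilt[OF V(2) V(1) iC A1 A2 u0(1) u0(2) Au F True disj Zne])
    then obtain u h where uh: "u \<noteq> 0" "\<forall>y\<in>C. u \<bullet> y \<le> h" "\<forall>y\<in>A. h \<le> u \<bullet> y" "\<forall>c. \<not> F \<subseteq> {y. u \<bullet> y = c}"
      by (elim exE conjE)
    have "\<forall>y\<in>C. h \<le> u \<bullet> (y + d *\<^sub>R w)"
    proof
      fix y assume "y \<in> C"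
      then have "d *\<^sub>R w + y \<in> A" unfolding A_def by blast
      then have "h \<le> u \<bullet> (d *\<^sub>R w + y)" using uh(3) by blast
      then show "h \<le> u \<bullet> (y + d *\<^sub>R w)" by (metis add.commute)
    qed
    then have sp: "sepok L C u h w" unfolding sepok_def d_def[symmetric] using uh(1,2) by blast
    have n1: "\<not> F \<subseteq> {y. u \<bullet> y = h}" using uh(4) by blast
    have n2: "\<not> F \<subseteq> {y. u \<bullet> y = h - lattice_diam L C * (u \<bullet> w)}" using uh(4) by blast
    show ?thesis using sp n1 n2 by (intro exI conjI)
  next
    case False
    show ?thesis
    proof (cases "F \<subseteq> {y. u0 \<bullet> y = h0 - d * (u0 \<bullet> w)}")
      case True
      define A where "A = (\<lambda>x. (- (d *\<^sub>R w)) + x) ` C"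
      have A1: "A = convex hull ((\<lambda>x. (- (d *\<^sub>R w)) + x) ` V)" unfolding A_def V(2) by (rule convex_hull_translation[symmetric])
      have A2: "finite ((\<lambda>x. (- (d *\<^sub>R w)) + x) ` V)" using V(1) by simp
      have m0: "- u0 \<noteq> 0" using u0(1) by simp
      have Cm: "\<forall>y\<in>C. (- u0) \<bullet> y \<le> - (h0 - d * (u0 \<bullet> w))"
      proof
        fix y assume "y \<in> C"
        then have "h0 \<le> u0 \<bullet> (y + d *\<^sub>R w)" using u0(3) by blast
        then show "(- u0) \<bullet> y \<le> - (h0 - d * (u0 \<bullet> w))" by (simp add: inner_add_right)
      qed
      have Am: "\<forall>y\<in>A. - (h0 - d * (u0 \<bullet> w)) \<le> (- u0) \<bullet> y"
      proof
        fix y assume "y \<in> A"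
        then obtain c where c: "c \<in> C" "y = - (d *\<^sub>R w) + c" unfolding A_def by blast
        have "u0 \<bullet> c \<le> h0" using u0(2) c(1) by blast
        moreover have "(- u0) \<bullet> y = d * (u0 \<bullet> w) - u0 \<bullet> c" using c(2) by (simp add: inner_add_right inner_diff_right)
        ultimately show "- (h0 - d * (u0 \<bullet> w)) \<le> (- u0) \<bullet> y" by linarith
      qed
      have Fm: "F \<subseteq> {y. (- u0) \<bullet> y = - (h0 - d * (u0 \<bullet> w))}"
      proof
        fix y assume "y \<in> F"
        then have "u0 \<bullet> y = h0 - d * (u0 \<bullet> w)" using True by blast
        then show "y \<in> {y. (- u0) \<bullet> y = - (h0 - d * (u0 \<bullet> w))}" by simp
      qed
      have disj: "rel_interior F \<inter> A = {}"
      proof (rule ccontr)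
        assume "rel_interior F \<inter> A \<noteq> {}"
        then obtain x c where xc: "x \<in> rel_interior F" "c \<in> C" "x = - (d *\<^sub>R w) + c" unfolding A_def by blast
        have "- w \<in> L" "- w \<noteq> 0" using wL lattice_grp[OF L] grp_uminus by auto
        moreover have "x - d *\<^sub>R (- w) = c" using xc(3) by simp
        ultimately have "x - lattice_diam L C *\<^sub>R (- w) \<in> C" using xc(2) unfolding d_def by simp
        then show False using noc xc(1) \<open>- w \<in> L\<close> \<open>- w \<noteq> 0\<close> by blast
      qed
      have Zne: "A \<inter> {y. (- u0) \<bullet> y = - (h0 - d * (u0 \<bullet> w))} \<noteq> {}"
      proof -
        have "- (d *\<^sub>R w) + (a + d *\<^sub>R w) \<in> A" unfolding A_def using a(2) by blast
        moreover have "- (d *\<^sub>R w) + (a + d *\<^sub>R w) = a" by simp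
        moreover have "u0 \<bullet> a \<le> h0 - d * (u0 \<bullet> w)"
        proof -
          have "u0 \<bullet> (a + d *\<^sub>R w) \<le> h0" using u0(2) a(2) by blast
          then show ?thesis by (simp add: inner_add_right)
        qed
        moreover have "h0 - d * (u0 \<bullet> w) \<le> u0 \<bullet> a"
        proof -
          have "h0 \<le> u0 \<bullet> (a + d *\<^sub>R w)" using u0(3) a(1) by blast
          then show ?thesis by (simp add: inner_add_right)
        qed
        ultimately have "a \<in> A \<inter> {y. (- u0) \<bullet> y = - (h0 - d * (u0 \<bullet> w))}" by simp
        then show ?thesis by blast
      qed
      have T: "\<exists>u h. u \<noteq> 0 \<and> (\<forall>y\<in>C. u \<bullet> y \<le> h) \<and> (\<forall>y\<in>A. h \<le> u \<bullet> y) \<and> (\<forall>c. \<not> F \<subseteq> {y. u \<bullet> y = c})"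
        by (rule tilt[OF V(2) V(1) iC A1 A2 m0 Cm Am F Fm disj Zne])
      then obtain u h where uh: "u \<noteq> 0" "\<forall>y\<in>C. u \<bullet> y \<le> h" "\<forall>y\<in>A. h \<le> u \<bullet> y" "\<forall>c. \<not> F \<subseteq> {y. u \<bullet> y = c}"
        by (elim exE conjE)
      have "sepok L C (- u) (- h - d * (u \<bullet> w)) w" unfolding sepok_def d_def[symmetric]
      proof (intro conjI ballI)
        show "- u \<noteq> 0" using uh(1) by simp
        fix y assume y: "y \<in> C"
        have "- (d *\<^sub>R w) + y \<in> A" unfolding A_def using y by blast
        then have "h \<le> u \<bullet> (- (d *\<^sub>R w) + y)" using uh(3) by blast
        then show "- u \<bullet> y \<le> - h - d * (u \<bullet> w)" by (simp add: inner_add_right inner_diff_right)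
      next
        fix y assume y: "y \<in> C"
        then show "- h - d * (u \<bullet> w) \<le> - u \<bullet> (y + d *\<^sub>R w)" using uh(2) by (simp add: inner_add_right)
      qed
      moreover have "\<forall>c. \<not> F \<subseteq> {y. (- u) \<bullet> y = c}"
      proof (intro allI notI)
        fix c assume "F \<subseteq> {y. (- u) \<bullet> y = c}"
        then have "F \<subseteq> {y. u \<bullet> y = - c}" by auto
        then show False using uh(4) by blast
      qed
      ultimately have sp: "sepok L C (- u) (- h - lattice_diam L C * (u \<bullet> w)) w"
        and nc: "\<forall>c. \<not> F \<subseteq> {y. (- u) \<bullet> y = c}" unfolding d_def by auto
      have n1: "\<not> F \<subseteq> {y. (- u) \<bullet> y = (- h - lattice_diam L C * (u \<bullet> w))}" using nc by blast
      have n2: "\<not> F \<subseteq> {y. (- u) \<bullet> y = (- h - lattice_diam L C * (u \<bullet> w)) - lattice_diam L C * ((- u) \<bullet> w)}" using nc by blast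
      show ?thesis using sp n1 n2 by (intro exI conjI)
    next
      case False2: False
      have "\<not> F \<subseteq> {y. u0 \<bullet> y = h0 - lattice_diam L C * (u0 \<bullet> w)}" using False2 unfolding d_def .
      then show ?thesis using s0 False by (intro exI conjI)
    qed
  qed
qed

lemma facet_contact:
  fixes L C :: "'a::euclidean_space set"
  assumes L: "is_lattice L" and C: "convex_body C" and comp: "lattice_complete L C"
    and F: "F facet_of C"
  shows "\<exists>x\<in>rel_interior F. \<exists>w\<in>L. w \<noteq> 0 \<and> x - lattice_diam L C *\<^sub>R w \<in> C"
proof (rule ccontr)
  assume "\<not> ?thesis"
  then have noc: "\<forall>x\<in>rel_interior F. \<forall>w\<in>L. w \<noteq> 0 \<longrightarrow> x - lattice_diam L C *\<^sub>R w \<notin> C" by blast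
  define d where "d = lattice_diam L C"
  define W where "W = diameter_directions L C"
  have cv: "convex C" and iC: "interior C \<noteq> {}" using C unfolding convex_body_def by auto
  have "\<forall>w\<in>W. \<exists>p. sepok L C (fst p) (snd p) w \<and> \<not> F \<subseteq> {y. fst p \<bullet> y = snd p}
           \<and> \<not> F \<subseteq> {y. fst p \<bullet> y = snd p - d * (fst p \<bullet> w)}"
    using good_sep[OF L C comp F noc] unfolding W_def d_def by fastforce
  then obtain f where f: "\<forall>w\<in>W. sepok L C (fst (f w)) (snd (f w)) w \<and> \<not> F \<subseteq> {y. fst (f w) \<bullet> y = snd (f w)}
           \<and> \<not> F \<subseteq> {y. fst (f w) \<bullet> y = snd (f w) - d * (fst (f w) \<bullet> w)}" by metis
  define u where "u = fst \<circ> f"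
  define h where "h = snd \<circ> f"
  have eq: "C = (\<Inter>w\<in>W. slab (u w) (h w - d * (u w \<bullet> w)) (h w))"
    using slab_rep[OF L C comp, of u h] f unfolding u_def h_def W_def d_def by simp
  have Fne: "F \<noteq> {}" and Fface: "F face_of C" using F unfolding facet_of_def by auto
  have cvF: "convex F" using face_of_imp_convex[OF Fface] .
  obtain x where x: "x \<in> rel_interior F" using rel_interior_eq_empty cvF Fne by blast
  have FC: "F \<subseteq> C" using face_of_imp_subset[OF Fface] .
  have xC: "x \<in> C" using x rel_interior_subset FC by blast
  have FneC: "F \<noteq> C"
  proof
    assume "F = C"
    then have "aff_dim C = aff_dim C - 1" using F unfolding facet_of_def by simp
    then show False by simp
  qed
  have "x \<notin> interior C" using face_of_disjoint_interior[OF Fface FneC] xC x rel_interior_subset by blast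
  then obtain w where w: "w \<in> W" "u w \<bullet> x = h w \<or> u w \<bullet> x = h w - d * (u w \<bullet> w)"
    using tight[OF W_finite[OF L C, folded W_def] eq xC] by blast
  have sw: "u w \<noteq> 0" "\<forall>y\<in>C. u w \<bullet> y \<le> h w" "\<forall>y\<in>C. h w \<le> u w \<bullet> (y + d *\<^sub>R w)"
    using f w(1) unfolding sepok_def u_def h_def d_def by auto
  from w(2) show False
  proof
    assume "u w \<bullet> x = h w"
    then have "C \<inter> {y. u w \<bullet> y = h w} = F" using face_tight[OF cv iC sw(1) sw(2) F x] by blast
    then have "F \<subseteq> {y. u w \<bullet> y = h w}" by blast
    then show False using f w(1) unfolding u_def h_def by auto
  next
    assume a: "u w \<bullet> x = h w - d * (u w \<bullet> w)"
    have m: "- u w \<noteq> 0" using sw(1) by simp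
    have "\<forall>y\<in>C. (- u w) \<bullet> y \<le> - (h w - d * (u w \<bullet> w))" using sw(3) by (auto simp: inner_add_right)
    moreover have "(- u w) \<bullet> x = - (h w - d * (u w \<bullet> w))" using a by simp
    ultimately have "C \<inter> {y. (- u w) \<bullet> y = - (h w - d * (u w \<bullet> w))} = F" using face_tight[OF cv iC m _ F x] by blast
    then have "F \<subseteq> {y. u w \<bullet> y = h w - d * (u w \<bullet> w)}" by auto
    then show False using f w(1) unfolding u_def h_def by auto
  qed
qed

lemma mid_interior:
  fixes L C :: "'a::euclidean_space set"
  assumes L: "is_lattice L" and C: "convex_body C" and comp: "lattice_complete L C"
    and F1: "F1 facet_of C" and F2: "F2 facet_of C" and ne: "F1 \<noteq> F2"
    and x1: "x1 \<in> rel_interior F1" and x2: "x2 \<in> rel_interior F2"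
  shows "(1/2) *\<^sub>R (x1 + x2) \<in> interior C"
proof (rule ccontr)
  assume nint: "(1/2) *\<^sub>R (x1 + x2) \<notin> interior C"
  define d where "d = lattice_diam L C"
  define W where "W = diameter_directions L C"
  have cv: "convex C" and iC: "interior C \<noteq> {}" using C unfolding convex_body_def by auto
  have "\<forall>w\<in>W. \<exists>p. sepok L C (fst p) (snd p) w"
    using sep_exists[OF L C] unfolding W_def by auto
  then obtain f where f: "\<forall>w\<in>W. sepok L C (fst (f w)) (snd (f w)) w" by metis
  define u where "u = fst \<circ> f"
  define h where "h = snd \<circ> f"
  have eq: "C = (\<Inter>w\<in>W. slab (u w) (h w - d * (u w \<bullet> w)) (h w))"
    using slab_rep[OF L C comp, of u h] f unfolding u_def h_def W_def d_def by simp
  have F1C: "F1 \<subseteq> C" using F1 unfolding facet_of_def using face_of_imp_subset by blast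
  have F2C: "F2 \<subseteq> C" using F2 unfolding facet_of_def using face_of_imp_subset by blast
  have x1C: "x1 \<in> C" using x1 rel_interior_subset F1C by blast
  have x2C: "x2 \<in> C" using x2 rel_interior_subset F2C by blast
  define y where "y = (1/2) *\<^sub>R (x1 + x2)"
  have yC: "y \<in> C" unfolding y_def using cv x1C x2C convexD[of C x1 x2 "1/2" "1/2"]
    by (simp add: scaleR_right_distrib)
  obtain w where w: "w \<in> W" "u w \<bullet> y = h w \<or> u w \<bullet> y = h w - d * (u w \<bullet> w)"
    using tight[OF W_finite[OF L C, folded W_def] eq yC] nint unfolding y_def by blast
  have sw: "u w \<noteq> 0" "\<forall>y\<in>C. u w \<bullet> y \<le> h w" "\<forall>y\<in>C. h w \<le> u w \<bullet> (y + d *\<^sub>R w)"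
    using f w(1) unfolding sepok_def u_def h_def d_def by auto
  have yy: "u w \<bullet> y = (u w \<bullet> x1 + u w \<bullet> x2) / 2" unfolding y_def by (simp add: inner_add_right)
  from w(2) show False
  proof
    assume a: "u w \<bullet> y = h w"
    have "u w \<bullet> x1 \<le> h w" "u w \<bullet> x2 \<le> h w" using sw(2) x1C x2C by auto
    moreover have "u w \<bullet> x1 + u w \<bullet> x2 = 2 * h w" using a yy by simp
    ultimately have "u w \<bullet> x1 = h w" "u w \<bullet> x2 = h w" by linarith+
    then have "C \<inter> {z. u w \<bullet> z = h w} = F1" "C \<inter> {z. u w \<bullet> z = h w} = F2"
      using face_tight[OF cv iC sw(1) sw(2) F1 x1] face_tight[OF cv iC sw(1) sw(2) F2 x2] by auto
    then show False using ne by simp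
  next
    assume a: "u w \<bullet> y = h w - d * (u w \<bullet> w)"
    have m: "- u w \<noteq> 0" using sw(1) by simp
    have lo: "\<forall>z\<in>C. (- u w) \<bullet> z \<le> - (h w - d * (u w \<bullet> w))" using sw(3) by (auto simp: inner_add_right)
    have "h w - d * (u w \<bullet> w) \<le> u w \<bullet> x1" "h w - d * (u w \<bullet> w) \<le> u w \<bullet> x2"
      using sw(3) x1C x2C by (auto simp: inner_add_right)
    moreover have "u w \<bullet> x1 + u w \<bullet> x2 = 2 * (h w - d * (u w \<bullet> w))" using a yy by simp
    ultimately have "u w \<bullet> x1 = h w - d * (u w \<bullet> w) \<and> u w \<bullet> x2 = h w - d * (u w \<bullet> w)"
      by (smt (verit))
    then have "u w \<bullet> x1 = h w - d * (u w \<bullet> w)" "u w \<bullet> x2 = h w - d * (u w \<bullet> w)" by auto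
    then have "(- u w) \<bullet> x1 = - (h w - d * (u w \<bullet> w))" "(- u w) \<bullet> x2 = - (h w - d * (u w \<bullet> w))" by simp_all
    then have "C \<inter> {z. (- u w) \<bullet> z = - (h w - d * (u w \<bullet> w))} = F1" "C \<inter> {z. (- u w) \<bullet> z = - (h w - d * (u w \<bullet> w))} = F2"
      using face_tight[OF cv iC m lo F1 x1] face_tight[OF cv iC m lo F2 x2] by auto
    then show False using ne by simp
  qed
qed

lemma pair_prop:
  fixes L C :: "'a::euclidean_space set"
  assumes L: "is_lattice L" and C: "convex_body C" and comp: "lattice_complete L C"
    and F1: "F1 facet_of C" and F2: "F2 facet_of C" and ne: "F1 \<noteq> F2"
    and x1: "x1 \<in> rel_interior F1" "w1 \<in> L" "x1 - lattice_diam L C *\<^sub>R w1 \<in> C"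
    and x2: "x2 \<in> rel_interior F2" "w2 \<in> L" "x2 - lattice_diam L C *\<^sub>R w2 \<in> C"
    and z: "z \<in> L" "w1 - w2 = 2 *\<^sub>R z"
  shows "w1 = - w2"
proof (rule ccontr)
  assume nw: "w1 \<noteq> - w2"
  define d where "d = lattice_diam L C"
  have d0: "d > 0" unfolding d_def using diam_pos[OF L C] .
  have cv: "convex C" and bC: "bounded C" using C unfolding convex_body_def by (auto simp: compact_imp_bounded)
  define m where "m = w1 - z"
  have mL: "m \<in> L" unfolding m_def using x1(2) z(1) grp_diff[OF lattice_grp[OF L]] by blast
  have "2 *\<^sub>R m = (w1 + w1) - (w1 - w2)" unfolding m_def using z(2) by (simp add: scaleR_diff_right scaleR_2)
  then have m2: "2 *\<^sub>R m = w1 + w2" by (simp add: algebra_simps)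
  have m0: "m \<noteq> 0"
  proof
    assume "m = 0"
    then have "w1 + w2 = 0" using m2 by simp
    then show False using nw by (simp add: add_eq_0_iff)
  qed
  define y where "y = (1/2) *\<^sub>R (x1 + x2)"
  have yint: "y \<in> interior C" unfolding y_def using mid_interior[OF L C comp F1 F2 ne x1(1) x2(1)] .
  have "y - d *\<^sub>R m = (1/2) *\<^sub>R (x1 - d *\<^sub>R w1) + (1/2) *\<^sub>R (x2 - d *\<^sub>R w2)"
  proof -
    have "d *\<^sub>R m = (1/2) *\<^sub>R (d *\<^sub>R (w1 + w2))" using m2 by (metis scaleR_scaleR scaleR_left_commute
          divide_self_if mult.commute nonzero_mult_div_cancel_left one_add_one scaleR_one zero_neq_numeral times_divide_eq_right)
    then show ?thesis unfolding y_def by (simp add: algebra_simps)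
  qed
  then have ym: "y - d *\<^sub>R m \<in> C" using convexD[OF cv x1(3)[folded d_def] x2(3)[folded d_def], of "1/2" "1/2"] by simp
  obtain r where r: "r > 0" "ball y r \<subseteq> C" using yint by (auto simp: mem_interior)
  define s where "s = r / (2 * norm m)"
  have s0: "s > 0" using r m0 unfolding s_def by simp
  have "norm (s *\<^sub>R m) < r" using r m0 unfolding s_def by simp
  then have "y + s *\<^sub>R m \<in> C" using r by (auto simp: dist_norm)
  moreover have "y + s *\<^sub>R m = (y - d *\<^sub>R m) + (d + s) *\<^sub>R m" by (simp add: algebra_simps)
  ultimately have "(y - d *\<^sub>R m) + (d + s) *\<^sub>R m \<in> C" by simp
  then have "d + s \<le> lattice_diam L C" using chord_le_diam[OF L bC ym _ mL] m0 s0 d0 by simp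
  then show False using s0 unfolding d_def by simp
qed

theorem theorem3p4:
  fixes L C :: "'a::euclidean_space set"
  assumes "is_lattice L"
    and "convex_body C"
    and "lattice_complete L C"
  shows "polytope C \<and>
         card {F. F facet_of C} \<le> 2 ^ (dim (diameter_directions L C) + 1) - 2"
proof
  note L = assms(1) and C = assms(2) and comp = assms(3)
  show pC: "polytope C" using C_polytope[OF L C comp] .
  define d where "d = lattice_diam L C"
  define W where "W = diameter_directions L C"
  define k where "k = dim W"
  have d0: "d > 0" unfolding d_def using diam_pos[OF L C] .
  have cv: "convex C" and bC: "bounded C" using C unfolding convex_body_def by (auto simp: compact_imp_bounded)
  define FS where "FS = {F. F facet_of C}"
  have finFS: "finite FS"
  proof -
    have "FS \<subseteq> {F. F face_of C}" unfolding FS_def facet_of_def by blast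
    then show ?thesis using finite_polytope_faces[OF pC] finite_subset by blast
  qed
  have "\<forall>F\<in>FS. \<exists>p. fst p \<in> rel_interior F \<and> snd p \<in> L \<and> snd p \<noteq> 0 \<and> fst p - d *\<^sub>R snd p \<in> C"
    using facet_contact[OF L C comp] unfolding FS_def d_def by fastforce
  then obtain f where f: "\<forall>F\<in>FS. fst (f F) \<in> rel_interior F \<and> snd (f F) \<in> L \<and> snd (f F) \<noteq> 0 \<and> fst (f F) - d *\<^sub>R snd (f F) \<in> C"
    by metis
  define X where "X = fst \<circ> f"
  define Wf where "Wf = snd \<circ> f"
  have fX: "\<And>F. F \<in> FS \<Longrightarrow> X F \<in> rel_interior F \<and> Wf F \<in> L \<and> Wf F \<noteq> 0 \<and> X F - d *\<^sub>R Wf F \<in> C"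
    using f unfolding X_def Wf_def by simp
  have XC: "\<And>F. F \<in> FS \<Longrightarrow> X F \<in> C"
  proof -
    fix F assume F: "F \<in> FS"
    then have "F \<subseteq> C" unfolding FS_def facet_of_def using face_of_imp_subset by blast
    then show "X F \<in> C" using fX[OF F] rel_interior_subset by blast
  qed
  have WfW: "\<And>F. F \<in> FS \<Longrightarrow> Wf F \<in> W"
  proof -
    fix F assume F: "F \<in> FS"
    have "(X F - d *\<^sub>R Wf F) + d *\<^sub>R Wf F \<in> C" using XC[OF F] by simp
    then show "Wf F \<in> W" unfolding W_def DD_char[OF cv] d_def[symmetric] using fX[OF F] by blast
  qed
  have not2: "\<And>F z. F \<in> FS \<Longrightarrow> z \<in> L \<Longrightarrow> Wf F \<noteq> 2 *\<^sub>R z"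
  proof
    fix F z assume F: "F \<in> FS" and z: "z \<in> L" and eq: "Wf F = 2 *\<^sub>R z"
    have z0: "z \<noteq> 0" using eq fX[OF F] by auto
    have a: "X F - d *\<^sub>R Wf F \<in> C" using fX[OF F] by blast
    have "(X F - d *\<^sub>R Wf F) + (2 * d) *\<^sub>R z = X F" using eq by (simp add: algebra_simps)
    then have "(X F - d *\<^sub>R Wf F) + (2 * d) *\<^sub>R z \<in> C" using XC[OF F] by simp
    then have "2 * d \<le> lattice_diam L C" using chord_le_diam[OF L bC a _ z z0] d0 by simp
    then show False using d0 unfolding d_def by simp
  qed
  have pair: "\<And>F1 F2 z. F1 \<in> FS \<Longrightarrow> F2 \<in> FS \<Longrightarrow> F1 \<noteq> F2 \<Longrightarrow> z \<in> L \<Longrightarrow> Wf F1 - Wf F2 = 2 *\<^sub>R z \<Longrightarrow> Wf F1 = - Wf F2"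
  proof -
    fix F1 F2 z assume a: "F1 \<in> FS" "F2 \<in> FS" "F1 \<noteq> F2" "z \<in> L" "Wf F1 - Wf F2 = 2 *\<^sub>R z"
    have F1: "F1 facet_of C" and F2: "F2 facet_of C" using a unfolding FS_def by auto
    show "Wf F1 = - Wf F2"
      using pair_prop[OF L C comp F1 F2 a(3), of "X F1" "Wf F1" "X F2" "Wf F2" z] fX[OF a(1)] fX[OF a(2)] a(4,5)
      unfolding d_def by blast
  qed
  have inj: "inj_on Wf FS"
  proof (rule inj_onI)
    fix F1 F2 assume a: "F1 \<in> FS" "F2 \<in> FS" "Wf F1 = Wf F2"
    show "F1 = F2"
    proof (rule ccontr)
      assume "F1 \<noteq> F2"
      moreover have "Wf F1 - Wf F2 = 2 *\<^sub>R 0" using a(3) by simp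
      moreover have "(0::'a) \<in> L" using grp_0[OF lattice_grp[OF L]] .
      ultimately have "Wf F1 = - Wf F2" using pair a(1,2) by blast
      then have "Wf F1 + Wf F2 = 0" by simp
      then have "Wf F2 + Wf F2 = 0" using a(3) by simp
      then have "2 *\<^sub>R Wf F2 = 0" by (simp add: scaleR_2)
      then have "Wf F2 = 0" by simp
      then show False using fX[OF a(2)] by blast
    qed
  qed
  define T where "T = Wf ` FS"
  have cardT: "card FS = card T" unfolding T_def using card_image[OF inj] by simp
  have finT: "finite T" unfolding T_def using finFS by simp
  define R where "R = (\<lambda>t s. \<exists>z\<in>L. t - s = 2 *\<^sub>R z)"
  have Lg: "grp L" using lattice_grp[OF L] .
  have "\<exists>S'\<subseteq>T. (\<forall>x\<in>S'. \<forall>y\<in>S'. R x y \<longrightarrow> x = y) \<and> card T \<le> 2 * card S'"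
  proof (rule red_classes[OF finT])
    show "\<forall>x\<in>T. R x x" unfolding R_def using grp_0[OF Lg] by force
    show "\<forall>x\<in>T. \<forall>y\<in>T. R x y \<longrightarrow> R y x" unfolding R_def
    proof (intro ballI impI)
      fix x y assume "\<exists>z\<in>L. x - y = 2 *\<^sub>R z"
      then obtain z where "z \<in> L" "x - y = 2 *\<^sub>R z" by blast
      then have "- z \<in> L" "y - x = 2 *\<^sub>R (- z)" using grp_uminus[OF Lg] by (auto simp: algebra_simps)
      then show "\<exists>z\<in>L. y - x = 2 *\<^sub>R z" by blast
    qed
    show "\<forall>x\<in>T. \<forall>y\<in>T. \<forall>z\<in>T. R x y \<longrightarrow> R y z \<longrightarrow> R x z" unfolding R_def
    proof (intro ballI impI)
      fix x y w assume "\<exists>z\<in>L. x - y = 2 *\<^sub>R z" "\<exists>z\<in>L. y - w = 2 *\<^sub>R z"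
      then obtain z1 z2 where "z1 \<in> L" "x - y = 2 *\<^sub>R z1" "z2 \<in> L" "y - w = 2 *\<^sub>R z2" by blast
      then have "z1 + z2 \<in> L" "x - w = 2 *\<^sub>R (z1 + z2)" using grp_add[OF Lg] by (auto simp: algebra_simps)
      then show "\<exists>z\<in>L. x - w = 2 *\<^sub>R z" by blast
    qed
    show "\<forall>x\<in>T. \<forall>y\<in>T. \<forall>z\<in>T. R x y \<longrightarrow> R x z \<longrightarrow> y \<noteq> x \<longrightarrow> z \<noteq> x \<longrightarrow> y = z"
    proof (intro ballI impI)
      fix x y w assume a: "x \<in> T" "y \<in> T" "w \<in> T" "R x y" "R x w" "y \<noteq> x" "w \<noteq> x"
      obtain F1 where F1: "F1 \<in> FS" "x = Wf F1" using a(1) unfolding T_def by blast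
      obtain F2 where F2: "F2 \<in> FS" "y = Wf F2" using a(2) unfolding T_def by blast
      obtain F3 where F3: "F3 \<in> FS" "w = Wf F3" using a(3) unfolding T_def by blast
      obtain z1 where z1: "z1 \<in> L" "x - y = 2 *\<^sub>R z1" using a(4) unfolding R_def by blast
      obtain z2 where z2: "z2 \<in> L" "x - w = 2 *\<^sub>R z2" using a(5) unfolding R_def by blast
      have n12: "F1 \<noteq> F2" using a(6) F1(2) F2(2) by auto
      have e12: "Wf F1 - Wf F2 = 2 *\<^sub>R z1" using z1(2) F1(2) F2(2) by simp
      have "Wf F1 = - Wf F2" by (rule pair[OF F1(1) F2(1) n12 z1(1) e12])
      then have xy: "x = - y" using F1(2) F2(2) by simp
      have n13: "F1 \<noteq> F3" using a(7) F1(2) F3(2) by auto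
      have e13: "Wf F1 - Wf F3 = 2 *\<^sub>R z2" using z2(2) F1(2) F3(2) by simp
      have "Wf F1 = - Wf F3" by (rule pair[OF F1(1) F3(1) n13 z2(1) e13])
      then have xw: "x = - w" using F1(2) F3(2) by simp
      from xy xw show "y = w" by (metis minus_minus)
    qed
  qed
  then obtain S' where S': "S' \<subseteq> T" "\<forall>x\<in>S'. \<forall>y\<in>S'. R x y \<longrightarrow> x = y" "card T \<le> 2 * card S'" by blast
  define G where "G = L \<inter> span W"
  have gG: "grp G" unfolding grp_def
  proof (intro conjI ballI)
    show "0 \<in> G" unfolding G_def using grp_0[OF Lg] span_zero by blast
    fix x y assume "x \<in> G" "y \<in> G"
    then show "x + y \<in> G" unfolding G_def using grp_add[OF Lg] span_add by blast
  next
    fix x assume "x \<in> G"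
    then show "- x \<in> G" unfolding G_def using grp_uminus[OF Lg] span_neg by blast
  qed
  obtain e where e: "udisc L e" using lattice_udisc[OF L] by blast
  have eG: "udisc G e" using e unfolding udisc_def G_def by simp
  have dimG: "dim G \<le> k" unfolding k_def
  proof -
    have "G \<subseteq> span W" unfolding G_def by blast
    then have "dim G \<le> dim (span W)" by (rule dim_subset)
    then show "dim G \<le> dim W" by simp
  qed
  have TW: "T \<subseteq> W"
  proof
    fix t assume "t \<in> T"
    then obtain F where "F \<in> FS" "t = Wf F" unfolding T_def by blast
    then show "t \<in> W" using WfW by simp
  qed
  have TL0: "\<forall>t\<in>T. t \<in> L \<and> t \<noteq> 0"
  proof
    fix t assume "t \<in> T"
    then obtain F where "F \<in> FS" "t = Wf F" unfolding T_def by blast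
    then show "t \<in> L \<and> t \<noteq> 0" using fX by simp
  qed
  have TG: "T \<subseteq> G"
  proof
    fix t assume "t \<in> T"
    then have "t \<in> L" "t \<in> W" using TL0 TW by auto
    then have "t \<in> L" "t \<in> span W" using span_base by auto
    then show "t \<in> G" unfolding G_def by simp
  qed
  define S0 where "S0 = insert 0 S'"
  have finS': "finite S'" using S'(1) finT finite_subset by blast
  have nS': "0 \<notin> S'" using S'(1) TL0 by blast
  have cS0: "card S0 = card S' + 1" unfolding S0_def using finS' nS' by simp
  have T2: "\<forall>t\<in>T. \<forall>z\<in>L. t \<noteq> 2 *\<^sub>R z"
  proof (intro ballI)
    fix t z assume "t \<in> T" "z \<in> L"
    then obtain F where "F \<in> FS" "t = Wf F" unfolding T_def by blast
    then show "t \<noteq> 2 *\<^sub>R z" using not2 \<open>z \<in> L\<close> by simp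
  qed
  have "card S0 \<le> 2 ^ k"
  proof (rule count_classes[OF gG eG dimG])
    show "finite S0" unfolding S0_def using finS' by simp
    show "S0 \<subseteq> G" unfolding S0_def using S'(1) TG grp_0[OF gG] by blast
    show "\<forall>x\<in>S0. \<forall>y\<in>S0. x \<noteq> y \<longrightarrow> \<not> (\<exists>z\<in>G. x - y = 2 *\<^sub>R z)"
    proof (intro ballI impI notI)
      fix x y assume xy: "x \<in> S0" "y \<in> S0" "x \<noteq> y" "\<exists>z\<in>G. x - y = 2 *\<^sub>R z"
      then obtain z where z: "z \<in> L" "x - y = 2 *\<^sub>R z" unfolding G_def by blast
      show False
      proof (cases "x = 0")
        case True
        then have "y \<in> S'" using xy unfolding S0_def by blast
        then have "y \<in> T" using S'(1) by blast
        moreover have "y = 2 *\<^sub>R (- z)"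
        proof -
          have "- y = 2 *\<^sub>R z" using z(2) True by simp
          then have "y = - (2 *\<^sub>R z)" by (metis minus_minus)
          then show ?thesis by simp
        qed
        moreover have "- z \<in> L" using z(1) grp_uminus[OF Lg] by blast
        ultimately show False using T2 by blast
      next
        case False
        then have xS: "x \<in> S'" using xy unfolding S0_def by blast
        show False
        proof (cases "y = 0")
          case True
          then have "x = 2 *\<^sub>R z" using z(2) by simp
          then show False using T2 xS S'(1) z(1) by blast
        next
          case False
          then have "y \<in> S'" using xy unfolding S0_def by blast
          moreover have "R x y" unfolding R_def using z by blast
          ultimately show False using S'(2) xS xy(3) by blast
        qed
      qed
    qed
  qed
  then have "card S' + 1 \<le> 2 ^ k" using cS0 by simp
  then have "card FS \<le> 2 * (2 ^ k - 1)" using cardT S'(3) by linarith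
  also have "\<dots> = 2 ^ (k + 1) - 2" by (simp add: right_diff_distrib')
  finally show "card {F. F facet_of C} \<le> 2 ^ (dim (diameter_directions L C) + 1) - 2"
    unfolding FS_def k_def W_def .
qed

end
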